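(* Fix $\theta\in(1/2,1)$, $h_0\in(0,1)$, $h_1\in(0,1]$ and $[\underline\alpha,\bar\alpha]\subset(0,1)$. Assume that for every realization of the disorder and every $\alpha$, $\langle\sigma_i\sigma_j\rangle-\langle\sigma_i\rangle\langle\sigma_j\rangle\ge0$ for all $i,j$. Assume the $J_X$ are independent with finite second moments and $\sum_X\mathrm{Var}(J_X)\le Cn$ for a constant $C$ independent of $n$, and let $C_P>0$ be a constant independent of $n,h_0,h_1,\alpha$ with $\mathbb E[(P_n-p_n)^2]\le C_P/n$ for all parameters. Let $\hat P_n(\alpha)=\mathbb E_{\boldsymbol\tau}P_n$ and $p_n(\alpha)=\mathbb EP_n$. Then for all sufficiently large $n$, $$\int_{\underline\alpha}^{\bar\alpha}d\alpha\,\mathbb E\Big[\Big(\frac{d\hat P_n(\alpha)}{d\alpha}-\frac{dp_n(\alpha)}{d\alpha}\Big)^2\Big]\le\frac{5C_P+40h_1^2}{n^{(5-4\theta)/3}}.$$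
   Context: Spins $\boldsymbol\sigma\in\{-1,1\}^n$, $\sigma_X=\prod_{i\in X}\sigma_i$. The couplings $J_X\ge0$, $X\subset\{1,\dots,n\}$, are independent random variables; $\tau_1,\dots,\tau_n$ are i.i.d. Poisson with mean $\alpha n^{\theta-1}$, independent of the couplings. Hamiltonian $\mathcal H(\boldsymbol\sigma)=-\sum_XJ_X\sigma_X-h_0\sum_i\sigma_i-h_1\sum_i\tau_i\sigma_i$, partition function $\mathcal Z$, Gibbs expectation $\langle\cdot\rangle$. Pressure $P_n=\frac1n\ln\mathcal Z$ (depending on $h_0,h_1,\alpha$ and the disorder). $\mathbb E_{\boldsymbol\tau}$ is expectation over $\boldsymbol\tau$ only and $\mathbb E$ is expectation over all $J_X$ and $\boldsymbol\tau$. *)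

theory Defs
  imports "HOL-Probability.Probability"
begin

definition spins :: "nat \<Rightarrow> (nat \<Rightarrow> real) set" where
  "spins n = PiE {..<n} (\<lambda>_. {-1, 1})"

definition spin_prod :: "(nat \<Rightarrow> real) \<Rightarrow> nat set \<Rightarrow> real" where
  "spin_prod \<sigma> X = (\<Prod>i\<in>X. \<sigma> i)"

definition hamiltonian ::
  "nat \<Rightarrow> real \<Rightarrow> real \<Rightarrow> (nat set \<Rightarrow> real) \<Rightarrow> (nat \<Rightarrow> nat) \<Rightarrow> (nat \<Rightarrow> real) \<Rightarrow> real" where
  "hamiltonian n h0 h1 J \<tau> \<sigma> =
     - (\<Sum>X\<in>Pow {..<n}. J X * spin_prod \<sigma> X)
     - h0 * (\<Sum>i<n. \<sigma> i) - h1 * (\<Sum>i<n. real (\<tau> i) * \<sigma> i)"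

definition partition_fn ::
  "nat \<Rightarrow> real \<Rightarrow> real \<Rightarrow> (nat set \<Rightarrow> real) \<Rightarrow> (nat \<Rightarrow> nat) \<Rightarrow> real" where
  "partition_fn n h0 h1 J \<tau> = (\<Sum>\<sigma>\<in>spins n. exp (- hamiltonian n h0 h1 J \<tau> \<sigma>))"

definition gibbs ::
  "nat \<Rightarrow> real \<Rightarrow> real \<Rightarrow> (nat set \<Rightarrow> real) \<Rightarrow> (nat \<Rightarrow> nat) \<Rightarrow> ((nat \<Rightarrow> real) \<Rightarrow> real) \<Rightarrow> real" where
  "gibbs n h0 h1 J \<tau> f =
     (\<Sum>\<sigma>\<in>spins n. f \<sigma> * exp (- hamiltonian n h0 h1 J \<tau> \<sigma>)) / partition_fn n h0 h1 J \<tau>"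

definition pressure ::
  "nat \<Rightarrow> real \<Rightarrow> real \<Rightarrow> (nat set \<Rightarrow> real) \<Rightarrow> (nat \<Rightarrow> nat) \<Rightarrow> real" where
  "pressure n h0 h1 J \<tau> = ln (partition_fn n h0 h1 J \<tau>) / real n"

definition tau_law :: "nat \<Rightarrow> real \<Rightarrow> real \<Rightarrow> (nat \<Rightarrow> nat) measure" where
  "tau_law n \<theta> \<alpha> = PiM {..<n} (\<lambda>_. measure_pmf (poisson_pmf (\<alpha> * real n powr (\<theta> - 1))))"

definition Phat ::
  "nat \<Rightarrow> real \<Rightarrow> real \<Rightarrow> real \<Rightarrow> (nat set \<Rightarrow> real) \<Rightarrow> real \<Rightarrow> real" where
  "Phat n \<theta> h0 h1 J \<alpha> = (\<integral>\<tau>. pressure n h0 h1 J \<tau> \<partial>tau_law n \<theta> \<alpha>)"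

definition pavg ::
  "(nat set \<Rightarrow> real) measure \<Rightarrow> nat \<Rightarrow> real \<Rightarrow> real \<Rightarrow> real \<Rightarrow> real \<Rightarrow> real" where
  "pavg JM n \<theta> h0 h1 \<alpha> = (\<integral>J. Phat n \<theta> h0 h1 J \<alpha> \<partial>JM)"

end

theory Submission
  imports Defs
begin

definition PP :: "nat \<Rightarrow> real \<Rightarrow> (nat \<Rightarrow> nat) measure" where
  "PP n l = PiM {..<n} (\<lambda>_. measure_pmf (poisson_pmf l))"

definition SS :: "nat \<Rightarrow> nat \<Rightarrow> (nat \<Rightarrow> nat) set" where
  "SS n m = {k \<in> PiE {..<n} (\<lambda>_. UNIV). (\<Sum>i<n. k i) = m}"

definition wt :: "nat \<Rightarrow> real \<Rightarrow> (nat \<Rightarrow> nat) \<Rightarrow> real" where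
  "wt n l k = (\<Prod>i<n. l ^ (k i) / fact (k i) * exp (- l))"

lemma space_PP: "space (PP n l) = PiE {..<n} (\<lambda>_. UNIV)"
  by (simp add: PP_def space_PiM)

lemma prob_PP: "prob_space (PP n l)"
  unfolding PP_def by (intro prob_space_PiM measure_pmf.prob_space_axioms)

lemma SS_sub: "SS n m \<subseteq> PiE {..<n} (\<lambda>_. {..m})"
proof
  fix k assume k: "k \<in> SS n m"
  have "k i \<le> m" if "i < n" for i
  proof -
    have "k i \<le> (\<Sum>i<n. k i)" using that by (intro member_le_sum) auto
    then show ?thesis using k by (simp add: SS_def)
  qed
  then show "k \<in> PiE {..<n} (\<lambda>_. {..m})" using k by (auto simp: SS_def PiE_def Pi_def)
qed

lemma finite_SS: "finite (SS n m)"
  by (rule finite_subset[OF SS_sub]) (intro finite_PiE, auto)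

lemma single_PiE: assumes "k \<in> PiE I (\<lambda>_. UNIV)" shows "{k} = PiE I (\<lambda>i. {k i})"
proof (intro set_eqI iffI)
  fix x assume "x \<in> PiE I (\<lambda>i. {k i})"
  moreover then have x': "x \<in> PiE I (\<lambda>_. UNIV)" by (auto simp: PiE_def)
  ultimately have "x = k" by (intro PiE_ext[OF x' assms]) auto
  then show "x \<in> {k}" by simp
qed (use assms in auto)

lemma singleton_PP: assumes "k \<in> PiE {..<n} (\<lambda>_. UNIV)" shows "{k} \<in> sets (PP n l)"
proof -
  have "{k} = PiE {..<n} (\<lambda>i. {k i})" using assms by (rule single_PiE)
  then show ?thesis unfolding PP_def by (simp add: sets_PiM_I_finite)
qed

lemma sets_PP: assumes "A \<subseteq> space (PP n l)" shows "A \<in> sets (PP n l)"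
proof (rule sets.countable)
  show "countable A"
    by (rule countable_subset[OF assms]) (simp add: space_PP countable_PiE)
  show "\<And>a. a \<in> A \<Longrightarrow> {a} \<in> sets (PP n l)" using assms by (auto simp: space_PP intro: singleton_PP)
qed

lemma meas_PP: "f \<in> measurable (PP n l) (borel :: 'a::topological_space measure)"
  by (auto intro!: measurableI sets_PP)

lemma emeasure_PP_single:
  assumes l: "0 < l" and k: "k \<in> PiE {..<n} (\<lambda>_. UNIV)"
  shows "emeasure (PP n l) {k} = ennreal (wt n l k)"
proof -
  interpret product_sigma_finite "\<lambda>_. measure_pmf (poisson_pmf l)"
    by unfold_locales
  have "{k} = PiE {..<n} (\<lambda>i. {k i})" using k by (rule single_PiE)
  then have "emeasure (PP n l) {k} = (\<Prod>i<n. emeasure (measure_pmf (poisson_pmf l)) {k i})"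
    unfolding PP_def by (simp add: emeasure_PiM)
  also have "\<dots> = (\<Prod>i<n. ennreal (l ^ (k i) / fact (k i) * exp (- l)))"
    using l by (simp add: emeasure_pmf_single)
  also have "\<dots> = ennreal (wt n l k)" unfolding wt_def using l
    by (subst prod_ennreal) auto
  finally show ?thesis .
qed

lemma SS_space: "k \<in> SS n m \<Longrightarrow> k \<in> PiE {..<n} (\<lambda>_. UNIV)"
  by (simp add: SS_def)

lemma nn_PP:
  assumes l: "0 < l"
  shows "(\<integral>\<^sup>+k. G k \<partial>PP n l) = (\<Sum>m. \<Sum>k\<in>SS n m. ennreal (wt n l k) * G k)"
proof -
  have eq: "G k = (\<Sum>m. \<Sum>j\<in>SS n m. G j * indicator {j} k)" if k: "k \<in> space (PP n l)" for k
  proof -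
    define m0 where "m0 = (\<Sum>i<n. k i)"
    have "(\<Sum>j\<in>SS n m. G j * indicator {j} k) = (if m = m0 then G k else 0)" for m
    proof (cases "m = m0")
      case True
      then have kS: "k \<in> SS n m" using k by (simp add: SS_def space_PP m0_def)
      have "(\<Sum>j\<in>SS n m. G j * indicator {j} k) = G k * indicator {k} k
               + (\<Sum>j\<in>SS n m - {k}. G j * indicator {j} k)"
        by (rule sum.remove[OF finite_SS kS])
      also have "(\<Sum>j\<in>SS n m - {k}. G j * indicator {j} k) = 0"
        by (intro sum.neutral) auto
      finally show ?thesis using True by simp
    next
      case False
      then have "k \<notin> SS n m" by (auto simp: SS_def m0_def)
      then have "(\<Sum>j\<in>SS n m. G j * indicator {j} k) = 0"
        by (intro sum.neutral) (auto simp: indicator_def)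
      then show ?thesis using False by simp
    qed
    then have "(\<lambda>m. \<Sum>j\<in>SS n m. G j * indicator {j} k) = (\<lambda>m. if m = m0 then G k else 0)"
      by auto
    moreover have "(\<lambda>m. if m = m0 then G k else 0) sums G k"
      using sums_single[of m0 "\<lambda>_. G k"] by simp
    ultimately show ?thesis by (simp add: sums_iff)
  qed
  have "(\<integral>\<^sup>+k. G k \<partial>PP n l) = (\<integral>\<^sup>+k. (\<Sum>m. \<Sum>j\<in>SS n m. G j * indicator {j} k) \<partial>PP n l)"
    by (rule nn_integral_cong) (use eq in auto)
  also have "\<dots> = (\<Sum>m. \<integral>\<^sup>+k. (\<Sum>j\<in>SS n m. G j * indicator {j} k) \<partial>PP n l)"
    by (rule nn_integral_suminf) (rule meas_PP)
  also have "\<dots> = (\<Sum>m. \<Sum>j\<in>SS n m. \<integral>\<^sup>+k. G j * indicator {j} k \<partial>PP n l)"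
    by (subst nn_integral_sum) (auto intro: meas_PP)
  also have "\<dots> = (\<Sum>m. \<Sum>j\<in>SS n m. ennreal (wt n l j) * G j)"
    by (intro suminf_cong sum.cong refl)
       (simp add: nn_integral_cmult_indicator singleton_PP SS_space emeasure_PP_single l mult.commute)
  finally show ?thesis .
qed

lemma nn_pois4:
  assumes l: "0 < l"
  shows "(\<integral>\<^sup>+y. ennreal (4 ^ y) \<partial>measure_pmf (poisson_pmf l)) \<noteq> \<top>"
proof -
  have "(\<integral>\<^sup>+y. ennreal (4 ^ y) \<partial>measure_pmf (poisson_pmf l))
      = (\<Sum>y. ennreal (exp (-l) * (inverse (fact y) * (4 * l) ^ y)))"
    using l by (simp add: nn_integral_measure_pmf nn_integral_count_space_nat power_mult_distrib
        divide_inverse ennreal_mult'[symmetric] mult_ac)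
  also have "\<dots> \<noteq> \<top>"
    using l by (intro ennreal_suminf_neq_top summable_mult summable_exp) auto
  finally show ?thesis .
qed

lemma nn_PP4:
  assumes l: "0 < l"
  shows "(\<integral>\<^sup>+k. ennreal (4 ^ (\<Sum>i<n. k i)) \<partial>PP n l) \<noteq> \<top>"
proof -
  interpret product_sigma_finite "\<lambda>_. measure_pmf (poisson_pmf l)"
    by unfold_locales
  have "(\<integral>\<^sup>+k. ennreal (4 ^ (\<Sum>i<n. k i)) \<partial>PP n l) = (\<integral>\<^sup>+k. (\<Prod>i<n. ennreal (4 ^ (k i))) \<partial>PP n l)"
    by (simp add: power_sum prod_ennreal)
  also have "\<dots> = (\<Prod>i<n. \<integral>\<^sup>+y. ennreal (4 ^ y) \<partial>measure_pmf (poisson_pmf l))"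
    unfolding PP_def by (rule product_nn_integral_prod) auto
  also have "\<dots> \<noteq> \<top>"
    using nn_pois4[OF l] by (simp add: power_eq_top_ennreal)
  finally show ?thesis .
qed

definition grows :: "nat \<Rightarrow> ((nat \<Rightarrow> nat) \<Rightarrow> real) \<Rightarrow> bool" where
  "grows n F \<longleftrightarrow> (\<exists>M. \<forall>k\<in>PiE {..<n} (\<lambda>_. UNIV). \<bar>F k\<bar> \<le> M * 4 ^ (\<Sum>i<n. k i))"

lemma wt_nonneg: "0 \<le> l \<Longrightarrow> 0 \<le> wt n l k"
  unfolding wt_def by (intro prod_nonneg) auto

lemma int_PP:
  assumes l: "0 < l" and g: "grows n F"
  shows "integrable (PP n l) F"
proof -
  obtain M where M: "\<And>k. k \<in> space (PP n l) \<Longrightarrow> \<bar>F k\<bar> \<le> M * 4 ^ (\<Sum>i<n. k i)"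
    using g by (auto simp: grows_def space_PP)
  have M': "\<bar>F k\<bar> \<le> \<bar>M\<bar> * 4 ^ (\<Sum>i<n. k i)" if "k \<in> space (PP n l)" for k
    using M[OF that] by (smt (verit) mult_right_mono zero_le_power)
  have "(\<integral>\<^sup>+k. ennreal (norm (F k)) \<partial>PP n l) \<le> (\<integral>\<^sup>+k. ennreal \<bar>M\<bar> * ennreal (4 ^ (\<Sum>i<n. k i)) \<partial>PP n l)"
    by (intro nn_integral_mono) (use M' in \<open>auto simp flip: ennreal_mult\<close>)
  also have "\<dots> = ennreal \<bar>M\<bar> * (\<integral>\<^sup>+k. ennreal (4 ^ (\<Sum>i<n. k i)) \<partial>PP n l)"
    by (rule nn_integral_cmult) (rule meas_PP)
  also have "\<dots> < \<top>" using nn_PP4[OF l] by (simp add: ennreal_mult_less_top top.not_eq_extremum)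
  finally have fin: "(\<integral>\<^sup>+k. ennreal (norm (F k)) \<partial>PP n l) < \<top>" .
  show ?thesis by (rule integrableI_bounded[OF meas_PP]) (use fin in \<open>simp add: infinity_ennreal_def\<close>)
qed

lemma grows_nonneg_sums:
  assumes l: "0 < l" and g: "grows n F" and nn: "\<And>k. 0 \<le> F k"
  shows "(\<lambda>m. \<Sum>k\<in>SS n m. wt n l k * F k) sums (\<integral>k. F k \<partial>PP n l)"
proof -
  define a where "a m = (\<Sum>k\<in>SS n m. wt n l k * F k)" for m
  have a_nn: "0 \<le> a m" for m unfolding a_def using l nn by (intro sum_nonneg mult_nonneg_nonneg wt_nonneg) auto
  have "(\<integral>\<^sup>+k. ennreal (F k) \<partial>PP n l) = (\<Sum>m. ennreal (a m))"
    unfolding nn_PP[OF l] a_def using l nn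
    by (intro suminf_cong) (simp add: sum_ennreal[symmetric] ennreal_mult' wt_nonneg sum_nonneg)
  moreover have "(\<integral>\<^sup>+k. ennreal (F k) \<partial>PP n l) = ennreal (\<integral>k. F k \<partial>PP n l)"
    using int_PP[OF l g] nn by (intro nn_integral_eq_integral) auto
  ultimately have eq: "(\<Sum>m. ennreal (a m)) = ennreal (\<integral>k. F k \<partial>PP n l)" by simp
  then have sa: "summable a" using a_nn by (intro summable_suminf_not_top) auto
  have "ennreal (suminf a) = ennreal (\<integral>k. F k \<partial>PP n l)"
    using eq suminf_ennreal2[OF a_nn sa] by simp
  then have "suminf a = (\<integral>k. F k \<partial>PP n l)"
    using a_nn sa nn by (subst (asm) ennreal_inj) (auto intro: suminf_nonneg integral_nonneg)
  then show ?thesis using sa unfolding a_def[abs_def] by (simp add: sums_iff)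
qed

lemma grows_max: "grows n F \<Longrightarrow> grows n (\<lambda>k. max (F k) 0)" "grows n F \<Longrightarrow> grows n (\<lambda>k. max (- F k) 0)"
proof -
  assume "grows n F"
  then obtain M where M: "\<forall>k\<in>PiE {..<n} (\<lambda>_. UNIV). \<bar>F k\<bar> \<le> M * 4 ^ (\<Sum>i<n. k i)"
    unfolding grows_def by blast
  have a: "\<bar>max x 0\<bar> \<le> \<bar>x\<bar>" "\<bar>max (-x) 0\<bar> \<le> \<bar>x\<bar>" for x :: real by auto
  show "grows n (\<lambda>k. max (F k) 0)" unfolding grows_def
    using M a(1) order.trans by blast
  show "grows n (\<lambda>k. max (- F k) 0)" unfolding grows_def
    using M a(2) order.trans by blast
qed

lemma sums_PP:
  assumes l: "0 < l" and g: "grows n F"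
  shows "(\<lambda>m. \<Sum>k\<in>SS n m. wt n l k * F k) sums (\<integral>k. F k \<partial>PP n l)"
proof -
  have s1: "(\<lambda>m. \<Sum>k\<in>SS n m. wt n l k * max (F k) 0) sums (\<integral>k. max (F k) 0 \<partial>PP n l)"
    by (rule grows_nonneg_sums[OF l grows_max(1)[OF g]]) auto
  have s2: "(\<lambda>m. \<Sum>k\<in>SS n m. wt n l k * max (- F k) 0) sums (\<integral>k. max (- F k) 0 \<partial>PP n l)"
    by (rule grows_nonneg_sums[OF l grows_max(2)[OF g]]) auto
  have e: "F k = max (F k) 0 - max (- F k) 0" for k by auto
  have "(\<integral>k. F k \<partial>PP n l) = (\<integral>k. max (F k) 0 - max (- F k) 0 \<partial>PP n l)" by (subst e) simp
  also have "\<dots> = (\<integral>k. max (F k) 0 \<partial>PP n l) - (\<integral>k. max (- F k) 0 \<partial>PP n l)"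
    by (rule Bochner_Integration.integral_diff) (auto intro: int_PP[OF l] grows_max g)
  finally have "(\<integral>k. F k \<partial>PP n l) = \<dots>" .
  moreover have "(\<lambda>m. (\<Sum>k\<in>SS n m. wt n l k * max (F k) 0) - (\<Sum>k\<in>SS n m. wt n l k * max (- F k) 0))
        = (\<lambda>m. \<Sum>k\<in>SS n m. wt n l k * F k)"
  proof (rule ext)
    fix m
    show "(\<Sum>k\<in>SS n m. wt n l k * max (F k) 0) - (\<Sum>k\<in>SS n m. wt n l k * max (- F k) 0)
        = (\<Sum>k\<in>SS n m. wt n l k * F k)"
      unfolding sum_subtractf[symmetric] right_diff_distrib[symmetric] e[symmetric] ..
  qed
  ultimately show ?thesis using sums_diff[OF s1 s2] by simp
qed

definition pf :: "nat \<Rightarrow> (nat \<Rightarrow> nat) \<Rightarrow> real" where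
  "pf n k = (\<Prod>j<n. fact (k j))"

definition cc :: "nat \<Rightarrow> ((nat \<Rightarrow> nat) \<Rightarrow> real) \<Rightarrow> nat \<Rightarrow> real" where
  "cc n F m = (\<Sum>k\<in>SS n m. F k / pf n k)"

definition DF :: "nat \<Rightarrow> ((nat \<Rightarrow> nat) \<Rightarrow> real) \<Rightarrow> (nat \<Rightarrow> nat) \<Rightarrow> real" where
  "DF n F k = (\<Sum>i<n. F (k(i := Suc (k i))) - F k)"

lemma pf_pos: "0 < pf n k" unfolding pf_def by (intro prod_pos) auto

lemma upd_sum: fixes k :: "'a \<Rightarrow> 'b::comm_monoid_add"
  assumes "i \<in> A" "finite A"
  shows "(\<Sum>j\<in>A. (k(i:=x)) j) + k i = (\<Sum>j\<in>A. k j) + x"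
proof -
  have "(\<Sum>j\<in>A. (k(i:=x)) j) = x + (\<Sum>j\<in>A-{i}. (k(i:=x)) j)" using assms by (subst sum.remove) auto
  also have "(\<Sum>j\<in>A-{i}. (k(i:=x)) j) = (\<Sum>j\<in>A-{i}. k j)" by (intro sum.cong) auto
  moreover have "(\<Sum>j\<in>A. k j) = k i + (\<Sum>j\<in>A-{i}. k j)" using assms by (subst sum.remove) auto
  ultimately show ?thesis by (simp add: ac_simps)
qed

lemma upd_prod: fixes g :: "'b \<Rightarrow> 'c::comm_monoid_mult"
  assumes "i \<in> A" "finite A"
  shows "(\<Prod>j\<in>A. g ((k(i:=x)) j)) * g (k i) = (\<Prod>j\<in>A. g (k j)) * g x"
proof -
  have "(\<Prod>j\<in>A. g ((k(i:=x)) j)) = g x * (\<Prod>j\<in>A-{i}. g ((k(i:=x)) j))" using assms by (subst prod.remove) auto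
  also have "(\<Prod>j\<in>A-{i}. g ((k(i:=x)) j)) = (\<Prod>j\<in>A-{i}. g (k j))" by (intro prod.cong) auto
  moreover have "(\<Prod>j\<in>A. g (k j)) = g (k i) * (\<Prod>j\<in>A-{i}. g (k j))" using assms by (subst prod.remove) auto
  ultimately show ?thesis by (simp add: ac_simps)
qed

lemma shift_SS: assumes k: "k \<in> SS n m" and i: "i < n" shows "k(i := Suc (k i)) \<in> SS n (Suc m)"
proof -
  have "(\<Sum>j<n. (k(i := Suc (k i))) j) + k i = (\<Sum>j<n. k j) + Suc (k i)"
    using i by (intro upd_sum) auto
  then show ?thesis using k i by (auto simp: SS_def PiE_def extensional_def)
qed

lemma unshift_SS: assumes k: "k \<in> SS n (Suc m)" and i: "i < n" and pos: "0 < k i"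
  shows "k(i := k i - 1) \<in> SS n m"
proof -
  have "(\<Sum>j<n. (k(i := k i - 1)) j) + k i = (\<Sum>j<n. k j) + (k i - 1)"
    using i by (intro upd_sum) auto
  then show ?thesis using k i pos by (auto simp: SS_def PiE_def extensional_def)
qed

lemma pf_shift: assumes i: "i < n" shows "pf n (k(i := Suc (k i))) = real (Suc (k i)) * pf n k"
proof -
  have "(\<Prod>j<n. fact ((k(i := Suc (k i))) j)) * fact (k i) = (\<Prod>j<n. fact (k j)) * (fact (Suc (k i)) :: real)"
    using i by (intro upd_prod) auto
  then have "pf n (k(i := Suc (k i))) * fact (k i) = (real (Suc (k i)) * pf n k) * fact (k i)"
    unfolding pf_def by (simp only: fact_Suc ac_simps)
  then show ?thesis by simp
qed

lemma comb_i:
  assumes i: "i < n"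
  shows "(\<Sum>k\<in>SS n m. F (k(i := Suc (k i))) / pf n k) = (\<Sum>k\<in>SS n (Suc m). F k * real (k i) / pf n k)"
proof -
  define T where "T = {k \<in> SS n (Suc m). 0 < k i}"
  have "(\<Sum>k\<in>SS n m. F (k(i := Suc (k i))) / pf n k) = (\<Sum>k\<in>T. F k * real (k i) / pf n k)"
  proof (rule sum.reindex_bij_witness[where j = "\<lambda>k. k(i := Suc (k i))" and i = "\<lambda>k. k(i := k i - 1)"])
    fix a assume "a \<in> SS n m"
    then show "a(i := Suc (a i), i := (a(i := Suc (a i))) i - 1) = a" by auto
    show "a(i := Suc (a i)) \<in> T" using shift_SS[OF \<open>a \<in> SS n m\<close> i] by (auto simp: T_def)
    have "pf n (a(i := Suc (a i))) = real (Suc (a i)) * pf n a" by (rule pf_shift[OF i])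
    then show "F (a(i := Suc (a i))) * real ((a(i := Suc (a i))) i) / pf n (a(i := Suc (a i))) =
          F (a(i := Suc (a i))) / pf n a" by (simp del: of_nat_Suc)
  next
    fix b assume "b \<in> T"
    then show "b(i := b i - 1, i := Suc ((b(i := b i - 1)) i)) = b" by (auto simp: T_def)
    show "b(i := b i - 1) \<in> SS n m" using \<open>b \<in> T\<close> unshift_SS i by (auto simp: T_def)
  qed
  also have "\<dots> = (\<Sum>k\<in>SS n (Suc m). F k * real (k i) / pf n k)"
    by (rule sum.mono_neutral_left) (auto simp: T_def finite_SS)
  finally show ?thesis .
qed

lemma cc_DF: "cc n (DF n F) m = real (Suc m) * cc n F (Suc m) - real n * cc n F m"
proof -
  have "cc n (DF n F) m = (\<Sum>k\<in>SS n m. \<Sum>i<n. F (k(i := Suc (k i))) / pf n k) - real n * cc n F m"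
    unfolding cc_def DF_def by (simp add: sum_subtractf diff_divide_distrib sum_divide_distrib sum_distrib_left)
  also have "(\<Sum>k\<in>SS n m. \<Sum>i<n. F (k(i := Suc (k i))) / pf n k) = (\<Sum>i<n. \<Sum>k\<in>SS n m. F (k(i := Suc (k i))) / pf n k)"
    by (rule sum.swap)
  also have "\<dots> = (\<Sum>i<n. \<Sum>k\<in>SS n (Suc m). F k * real (k i) / pf n k)"
    by (intro sum.cong refl comb_i) auto
  also have "\<dots> = (\<Sum>k\<in>SS n (Suc m). F k / pf n k * real (\<Sum>i<n. k i))"
    by (subst sum.swap) (simp add: sum_distrib_left)
  also have "\<dots> = (\<Sum>k\<in>SS n (Suc m). F k / pf n k * real (Suc m))"
    by (intro sum.cong refl) (simp add: SS_def)
  also have "\<dots> = real (Suc m) * cc n F (Suc m)" unfolding cc_def by (simp add: sum_distrib_left ac_simps)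
  finally show ?thesis .
qed

definition EF :: "nat \<Rightarrow> ((nat \<Rightarrow> nat) \<Rightarrow> real) \<Rightarrow> real \<Rightarrow> real" where
  "EF n F l = (\<integral>k. F k \<partial>PP n l)"

lemma wt_SS: assumes "k \<in> SS n m" shows "wt n l k = exp (- (real n * l)) * l ^ m / pf n k"
proof -
  have "wt n l k = (\<Prod>i<n. l ^ k i) * (\<Prod>i<n. exp (- l)) / pf n k"
    unfolding wt_def pf_def by (simp add: prod.distrib prod_dividef)
  also have "(\<Prod>i<n. l ^ k i) = l ^ m" using assms by (simp add: SS_def power_sum[symmetric])
  also have "(\<Prod>i<n. exp (- l)) = exp (- (real n * l))"
    by (simp add: exp_of_nat_mult[symmetric])
  finally show ?thesis by simp
qed

lemma series_PP:
  assumes l: "0 < l" and g: "grows n F"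
  shows "(\<lambda>m. cc n F m * l ^ m) sums (exp (real n * l) * EF n F l)"
proof -
  have "(\<lambda>m. exp (real n * l) * (\<Sum>k\<in>SS n m. wt n l k * F k)) sums (exp (real n * l) * EF n F l)"
    unfolding EF_def by (intro sums_mult sums_PP l g)
  moreover have "exp (real n * l) * (\<Sum>k\<in>SS n m. wt n l k * F k) = cc n F m * l ^ m" for m
  proof -
    have "(\<Sum>k\<in>SS n m. wt n l k * F k) = exp (- (real n * l)) * (cc n F m * l ^ m)"
      unfolding cc_def by (simp add: wt_SS sum_distrib_left sum_distrib_right ac_simps cong: sum.cong)
    then show ?thesis by (simp add: exp_minus field_simps)
  qed
  ultimately show ?thesis by simp
qed

lemma grows_DF: assumes "grows n F" shows "grows n (DF n F)"
proof -
  obtain M where M: "\<And>k. k \<in> PiE {..<n} (\<lambda>_. UNIV) \<Longrightarrow> \<bar>F k\<bar> \<le> M * 4 ^ (\<Sum>i<n. k i)"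
    using assms unfolding grows_def by blast
  have "\<bar>DF n F k\<bar> \<le> (real n * (5 * M)) * 4 ^ (\<Sum>i<n. k i)" if k: "k \<in> PiE {..<n} (\<lambda>_. UNIV)" for k
  proof -
    have "\<bar>F (k(i := Suc (k i))) - F k\<bar> \<le> 5 * M * 4 ^ (\<Sum>i<n. k i)" if i: "i < n" for i
    proof -
      have kk: "k \<in> SS n (\<Sum>i<n. k i)" using k by (simp add: SS_def)
      have "k(i := Suc (k i)) \<in> SS n (Suc (\<Sum>i<n. k i))" by (rule shift_SS[OF kk i])
      then have m1: "k(i := Suc (k i)) \<in> PiE {..<n} (\<lambda>_. UNIV)"
        and m2: "(\<Sum>j<n. (k(i := Suc (k i))) j) = Suc (\<Sum>i<n. k i)"
        unfolding SS_def mem_Collect_eq by blast+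
      have "\<bar>F (k(i := Suc (k i)))\<bar> \<le> M * 4 ^ (\<Sum>j<n. (k(i := Suc (k i))) j)" by (rule M[OF m1])
      then have "\<bar>F (k(i := Suc (k i)))\<bar> \<le> M * 4 ^ Suc (\<Sum>i<n. k i)" by (simp only: m2)
      then show ?thesis using M[OF k] by simp
    qed
    then have "\<bar>DF n F k\<bar> \<le> (\<Sum>i<n. 5 * M * 4 ^ (\<Sum>i<n. k i))"
      unfolding DF_def by (intro order.trans[OF sum_abs] sum_mono) auto
    then show ?thesis by simp
  qed
  then show ?thesis unfolding grows_def by blast
qed

lemma deriv_EF:
  assumes l: "0 < l" and g: "grows n F"
  shows "(EF n F has_field_derivative EF n (DF n F) l) (at l)"
proof -
  define c where "c = cc n F"
  define S where "S = (\<lambda>x::real. \<Sum>m. c m * x ^ m)"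
  have sumsx: "(\<lambda>m. c m * x ^ m) sums (exp (real n * x) * EF n F x)" if "0 < x" for x
    unfolding c_def by (rule series_PP[OF that g])
  have eqx: "EF n F x = exp (- (real n * x)) * S x" if "0 < x" for x
    using sums_unique[OF sumsx[OF that]] unfolding S_def by (simp add: exp_minus field_simps)
  have dS: "(S has_field_derivative (\<Sum>m. diffs c m * l ^ m)) (at l)"
    unfolding S_def
    by (rule termdiffs_strong[of _ "l + 1"]) (use sumsx[of "l+1"] l in \<open>auto simp: sums_iff\<close>)
  have s1: "(\<lambda>m. cc n (DF n F) m * l ^ m) sums (exp (real n * l) * EF n (DF n F) l)"
    by (rule series_PP[OF l grows_DF[OF g]])
  have s2: "(\<lambda>m. real n * (c m * l ^ m)) sums (real n * (exp (real n * l) * EF n F l))"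
    by (intro sums_mult sumsx l)
  have "(\<lambda>m. diffs c m * l ^ m) = (\<lambda>m. cc n (DF n F) m * l ^ m + real n * (c m * l ^ m))"
    by (auto simp: diffs_def cc_DF c_def algebra_simps)
  then have "(\<lambda>m. diffs c m * l ^ m) sums (exp (real n * l) * EF n (DF n F) l + real n * (exp (real n * l) * EF n F l))"
    using sums_add[OF s1 s2] by simp
  then have dd: "(\<Sum>m. diffs c m * l ^ m) = exp (real n * l) * EF n (DF n F) l + real n * (exp (real n * l) * EF n F l)"
    by (simp add: sums_iff)
  have Sl: "S l = exp (real n * l) * EF n F l" using sumsx[OF l] unfolding S_def by (simp add: sums_iff)
  have "((\<lambda>x. exp (- (real n * x)) * S x) has_field_derivative
        (exp (- (real n * l)) * (- real n)) * S l + exp (- (real n * l)) * (\<Sum>m. diffs c m * l ^ m)) (at l)"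
  proof -
    have de: "((\<lambda>x. exp (- (real n * x))) has_field_derivative exp (- (real n * l)) * (- real n)) (at l)"
      by (auto intro!: derivative_eq_intros)
    show ?thesis using DERIV_mult[OF de dS] by (simp add: mult.commute)
  qed
  also have "(exp (- (real n * l)) * (- real n)) * S l + exp (- (real n * l)) * (\<Sum>m. diffs c m * l ^ m) = EF n (DF n F) l"
    unfolding dd Sl by (simp add: exp_minus field_simps)
  finally have d: "((\<lambda>x. exp (- (real n * x)) * S x) has_field_derivative EF n (DF n F) l) (at l)" .
  show ?thesis
    by (rule has_field_derivative_transform_within_open[OF d, of "{0<..}"]) (use l eqx in auto)
qed

lemma spins_val: "\<sigma> \<in> spins n \<Longrightarrow> i < n \<Longrightarrow> \<sigma> i = -1 \<or> \<sigma> i = 1"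
  unfolding spins_def by (auto simp: PiE_def Pi_def)

lemma spins_abs: "\<sigma> \<in> spins n \<Longrightarrow> i < n \<Longrightarrow> \<bar>\<sigma> i\<bar> = 1"
  using spins_val by fastforce

lemma finite_spins: "finite (spins n)"
  unfolding spins_def by (intro finite_PiE) auto

lemma spins_ne: "spins n \<noteq> {}"
  unfolding spins_def by (simp add: PiE_eq_empty_iff)

lemma card_spins: "card (spins n) = 2 ^ n"
  unfolding spins_def by (simp add: card_PiE numeral_2_eq_2)

lemma spin_prod_abs: "\<sigma> \<in> spins n \<Longrightarrow> X \<subseteq> {..<n} \<Longrightarrow> \<bar>spin_prod \<sigma> X\<bar> = 1"
  unfolding spin_prod_def abs_prod by (intro prod.neutral) (auto intro: spins_abs)

lemma sum_upd_gen: fixes f :: "'b \<Rightarrow> 'a \<Rightarrow> 'c::ab_group_add"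
  assumes "i \<in> A" "finite A"
  shows "(\<Sum>j\<in>A. f ((\<tau>(i:=x)) j) j) = (\<Sum>j\<in>A. f (\<tau> j) j) - f (\<tau> i) i + f x i"
proof -
  have "(\<Sum>j\<in>A. f ((\<tau>(i:=x)) j) j) = f x i + (\<Sum>j\<in>A-{i}. f ((\<tau>(i:=x)) j) j)" using assms by (subst sum.remove) auto
  also have "(\<Sum>j\<in>A-{i}. f ((\<tau>(i:=x)) j) j) = (\<Sum>j\<in>A-{i}. f (\<tau> j) j)" by (intro sum.cong) auto
  moreover have "(\<Sum>j\<in>A. f (\<tau> j) j) = f (\<tau> i) i + (\<Sum>j\<in>A-{i}. f (\<tau> j) j)" using assms by (subst sum.remove) auto
  ultimately show ?thesis by (simp add: algebra_simps)
qed

lemma ham_shift: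
  assumes i: "i < n"
  shows "hamiltonian n h0 h1 J (\<tau>(i := Suc (\<tau> i))) \<sigma> = hamiltonian n h0 h1 J \<tau> \<sigma> - h1 * \<sigma> i"
proof -
  have "(\<Sum>j<n. real ((\<tau>(i := Suc (\<tau> i))) j) * \<sigma> j) = (\<Sum>j<n. real (\<tau> j) * \<sigma> j) - real (\<tau> i) * \<sigma> i + real (Suc (\<tau> i)) * \<sigma> i"
    using sum_upd_gen[of i "{..<n}" "\<lambda>t j. real t * \<sigma> j" \<tau> "Suc (\<tau> i)"] i by simp
  then show ?thesis unfolding hamiltonian_def by (simp add: algebra_simps)
qed

lemma Z_shift:
  assumes i: "i < n"
  shows "partition_fn n h0 h1 J (\<tau>(i := Suc (\<tau> i))) =
         (\<Sum>\<sigma>\<in>spins n. exp (- hamiltonian n h0 h1 J \<tau> \<sigma>) * exp (h1 * \<sigma> i))"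
  unfolding partition_fn_def ham_shift[OF i] by (simp add: exp_add[symmetric])

lemma Z_pos: "0 < partition_fn n h0 h1 J \<tau>"
  unfolding partition_fn_def using finite_spins spins_ne by (intro sum_pos) auto

lemma ham_bound:
  assumes s: "\<sigma> \<in> spins n" and h0: "0 \<le> h0" and h1: "0 \<le> h1"
  shows "\<bar>hamiltonian n h0 h1 J \<tau> \<sigma>\<bar> \<le> (\<Sum>X\<in>Pow {..<n}. \<bar>J X\<bar>) + h0 * n + h1 * (\<Sum>i<n. real (\<tau> i))"
proof -
  have a: "\<bar>\<Sum>X\<in>Pow {..<n}. J X * spin_prod \<sigma> X\<bar> \<le> (\<Sum>X\<in>Pow {..<n}. \<bar>J X\<bar>)"
    by (rule order.trans[OF sum_abs]) (auto simp: abs_mult spin_prod_abs[OF s])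
  have b: "\<bar>\<Sum>i<n. \<sigma> i\<bar> \<le> n"
    by (rule order.trans[OF sum_abs]) (auto simp: spins_abs[OF s])
  have c: "\<bar>\<Sum>i<n. real (\<tau> i) * \<sigma> i\<bar> \<le> (\<Sum>i<n. real (\<tau> i))"
    by (rule order.trans[OF sum_abs]) (auto simp: abs_mult spins_abs[OF s])
  have "\<bar>h0 * (\<Sum>i<n. \<sigma> i)\<bar> \<le> h0 * n" using b h0 by (simp add: abs_mult mult_left_mono)
  moreover have "\<bar>h1 * (\<Sum>i<n. real (\<tau> i) * \<sigma> i)\<bar> \<le> h1 * (\<Sum>i<n. real (\<tau> i))" using c h1 by (simp add: abs_mult mult_left_mono)
  ultimately show ?thesis using a unfolding hamiltonian_def by linarith
qed

lemma lnZ_bound: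
  assumes h0: "0 \<le> h0" and h1: "0 \<le> h1"
  shows "\<bar>ln (partition_fn n h0 h1 J \<tau>)\<bar> \<le> n * ln 2 + (\<Sum>X\<in>Pow {..<n}. \<bar>J X\<bar>) + h0 * n + h1 * (\<Sum>i<n. real (\<tau> i))"
proof -
  define B where "B = (\<Sum>X\<in>Pow {..<n}. \<bar>J X\<bar>) + h0 * n + h1 * (\<Sum>i<n. real (\<tau> i))"
  have hb: "\<bar>hamiltonian n h0 h1 J \<tau> \<sigma>\<bar> \<le> B" if "\<sigma> \<in> spins n" for \<sigma>
    unfolding B_def by (rule ham_bound[OF that h0 h1])
  obtain \<sigma>0 where s0: "\<sigma>0 \<in> spins n" using spins_ne by blast
  have "exp (- B) \<le> exp (- hamiltonian n h0 h1 J \<tau> \<sigma>0)" using hb[OF s0] by simp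
  also have "\<dots> \<le> partition_fn n h0 h1 J \<tau>"
    unfolding partition_fn_def by (rule member_le_sum[OF s0]) (auto simp: finite_spins)
  finally have lo: "exp (- B) \<le> partition_fn n h0 h1 J \<tau>" .
  have "partition_fn n h0 h1 J \<tau> \<le> (\<Sum>\<sigma>\<in>spins n. exp B)"
    unfolding partition_fn_def by (intro sum_mono) (use hb in \<open>auto simp: abs_le_iff\<close>)
  also have "\<dots> = 2 ^ n * exp B" by (simp add: card_spins)
  finally have hi: "partition_fn n h0 h1 J \<tau> \<le> 2 ^ n * exp B" .
  have "- B \<le> ln (partition_fn n h0 h1 J \<tau>)"
    using lo Z_pos by (subst ln_ge_iff) auto
  moreover have "ln (partition_fn n h0 h1 J \<tau>) \<le> ln (2 ^ n * exp B)"
    using hi Z_pos by (subst ln_le_cancel_iff) auto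
  moreover have "ln (2 ^ n * exp B) = n * ln 2 + B" by (simp add: ln_mult ln_realpow)
  moreover have "0 \<le> B" using h0 h1 unfolding B_def by (intro add_nonneg_nonneg mult_nonneg_nonneg sum_nonneg) auto
  moreover have "0 \<le> real n * ln 2" by simp
  ultimately show ?thesis unfolding B_def abs_le_iff by linarith
qed

lemma real_le_2pow: "real s \<le> 2 ^ s"
proof -
  have "s < 2 ^ s" by (rule less_exp)
  then show "real s \<le> 2 ^ s" by (metis less_imp_le of_nat_le_iff of_nat_numeral of_nat_power)
qed

lemma pow24: "(2::real) ^ s \<le> 4 ^ s" by (intro power_mono) auto

lemma pressure_bound2:
  assumes n: "1 \<le> n" and h0: "0 \<le> h0" and h1: "0 \<le> h1"
  shows "\<bar>pressure n h0 h1 J \<tau>\<bar> \<le> (ln 2 + h0 + h1 + (\<Sum>X\<in>Pow {..<n}. \<bar>J X\<bar>) / n) * 2 ^ (\<Sum>i<n. \<tau> i)"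
proof -
  define s where "s = (\<Sum>i<n. \<tau> i)"
  define SJ where "SJ = (\<Sum>X\<in>Pow {..<n}. \<bar>J X\<bar>)"
  have SJ: "0 \<le> SJ" unfolding SJ_def by (intro sum_nonneg) auto
  have R: "1 \<le> (2::real) ^ s" by simp
  have sR: "real s \<le> 2 ^ s" by (rule real_le_2pow)
  have np: "0 < real n" using n by simp
  have "\<bar>pressure n h0 h1 J \<tau>\<bar> = \<bar>ln (partition_fn n h0 h1 J \<tau>)\<bar> / n"
    unfolding pressure_def by simp
  also have "\<dots> \<le> (n * ln 2 + SJ + h0 * n + h1 * real s) / n"
    using lnZ_bound[OF h0 h1, of n J \<tau>] np unfolding SJ_def s_def
    by (intro divide_right_mono) (auto simp: of_nat_sum)
  also have "\<dots> = ln 2 + h0 + SJ / n + h1 * (real s / n)" using np by (simp add: field_simps)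
  also have "\<dots> \<le> (ln 2 + h0 + h1 + SJ / n) * 2 ^ s"
  proof -
    have "real s \<le> real s * real n" using n by (simp add: mult_le_cancel_left1)
    then have "real s / n \<le> real s" using np by (simp add: divide_le_eq)
    then have "real s / n \<le> 2 ^ s" using sR by linarith
    then have "h1 * (real s / n) \<le> h1 * 2 ^ s" using h1 by (intro mult_left_mono) auto
    moreover have "ln 2 + h0 + SJ / n \<le> (ln 2 + h0 + SJ / n) * 2 ^ s"
    proof -
      have nn: "0 \<le> ln 2 + h0 + SJ / n" using SJ h0 np by (intro add_nonneg_nonneg) auto
      show ?thesis using mult_left_mono[OF R nn] by simp
    qed
    ultimately show ?thesis by (simp add: algebra_simps)
  qed
  finally show ?thesis unfolding s_def SJ_def .
qed

lemma pressure_bound: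
  assumes n: "1 \<le> n" and h0: "0 \<le> h0" and h1: "0 \<le> h1"
  shows "\<bar>pressure n h0 h1 J \<tau>\<bar> \<le> (ln 2 + h0 + h1 + (\<Sum>X\<in>Pow {..<n}. \<bar>J X\<bar>) / n) * 4 ^ (\<Sum>i<n. \<tau> i)"
proof -
  have nn: "0 \<le> ln 2 + h0 + h1 + (\<Sum>X\<in>Pow {..<n}. \<bar>J X\<bar>) / n" using h0 h1
    by (intro add_nonneg_nonneg divide_nonneg_nonneg sum_nonneg) auto
  show ?thesis using pressure_bound2[OF n h0 h1, of J \<tau>] mult_left_mono[OF pow24[of "\<Sum>i<n. \<tau> i"] nn] by linarith
qed

lemma grows_pressure:
  assumes n: "1 \<le> n" and h0: "0 \<le> h0" and h1: "0 \<le> h1"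
  shows "grows n (pressure n h0 h1 J)"
  unfolding grows_def using pressure_bound[OF n h0 h1] by blast

lemma Z_shift_bounds:
  assumes i: "i < n" and h1: "0 \<le> h1"
  shows "exp (- h1) * partition_fn n h0 h1 J \<tau> \<le> partition_fn n h0 h1 J (\<tau>(i := Suc (\<tau> i)))"
    and "partition_fn n h0 h1 J (\<tau>(i := Suc (\<tau> i))) \<le> exp h1 * partition_fn n h0 h1 J \<tau>"
proof -
  have b: "exp (- h1) \<le> exp (h1 * \<sigma> i) \<and> exp (h1 * \<sigma> i) \<le> exp h1" if "\<sigma> \<in> spins n" for \<sigma>
    using spins_val[OF that i] h1 by auto
  show "exp (- h1) * partition_fn n h0 h1 J \<tau> \<le> partition_fn n h0 h1 J (\<tau>(i := Suc (\<tau> i)))"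
    unfolding Z_shift[OF i] unfolding partition_fn_def sum_distrib_left
    by (intro sum_mono) (use b in \<open>auto simp: mult.commute intro!: mult_left_mono\<close>)
  show "partition_fn n h0 h1 J (\<tau>(i := Suc (\<tau> i))) \<le> exp h1 * partition_fn n h0 h1 J \<tau>"
    unfolding Z_shift[OF i] unfolding partition_fn_def sum_distrib_left
    by (intro sum_mono) (use b in \<open>auto simp: mult.commute intro!: mult_left_mono\<close>)
qed

lemma pressure_shift_bound:
  assumes n: "1 \<le> n" and i: "i < n" and h1: "0 \<le> h1"
  shows "\<bar>pressure n h0 h1 J (\<tau>(i := Suc (\<tau> i))) - pressure n h0 h1 J \<tau>\<bar> \<le> h1 / n"
proof -
  let ?Z = "partition_fn n h0 h1 J \<tau>" and ?Z' = "partition_fn n h0 h1 J (\<tau>(i := Suc (\<tau> i)))"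
  have Zp: "0 < ?Z" "0 < ?Z'" by (rule Z_pos)+
  have "ln (exp (- h1) * ?Z) \<le> ln ?Z'" using Z_shift_bounds(1)[OF i h1, of h0 J \<tau>] Zp by (subst ln_le_cancel_iff) auto
  moreover have "ln ?Z' \<le> ln (exp h1 * ?Z)" using Z_shift_bounds(2)[OF i h1, of h0 J \<tau>] Zp by (subst ln_le_cancel_iff) auto
  ultimately have "\<bar>ln ?Z' - ln ?Z\<bar> \<le> h1" using Zp by (auto simp: ln_mult)
  moreover have "pressure n h0 h1 J (\<tau>(i := Suc (\<tau> i))) - pressure n h0 h1 J \<tau> = (ln ?Z' - ln ?Z) / n"
    unfolding pressure_def by (simp add: diff_divide_distrib)
  ultimately show ?thesis using n by (simp add: divide_right_mono)
qed

lemma DF_pressure_bound: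
  assumes n: "1 \<le> n" and h1: "0 \<le> h1"
  shows "\<bar>DF n (pressure n h0 h1 J) \<tau>\<bar> \<le> h1"
proof -
  have "\<bar>DF n (pressure n h0 h1 J) \<tau>\<bar> \<le> (\<Sum>i<n. h1 / n)"
    unfolding DF_def by (intro order.trans[OF sum_abs] sum_mono pressure_shift_bound n h1) auto
  also have "\<dots> = h1" using n by simp
  finally show ?thesis .
qed

lemma exp_spin:
  assumes "\<sigma> \<in> spins n" "i < n"
  shows "exp (h1 * \<sigma> i) = (exp h1 + exp (- h1)) / 2 + (exp h1 - exp (- h1)) / 2 * \<sigma> i"
  using spins_val[OF assms] by (auto simp: field_simps)

lemma pair_ineq:
  assumes i: "i < n" and j: "j < n"
    and corr: "gibbs n h0 h1 J \<tau> (\<lambda>\<sigma>. \<sigma> i * \<sigma> j) - gibbs n h0 h1 J \<tau> (\<lambda>\<sigma>. \<sigma> i) * gibbs n h0 h1 J \<tau> (\<lambda>\<sigma>. \<sigma> j) \<ge> 0"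
  shows "partition_fn n h0 h1 J (\<tau>(i := Suc (\<tau> i))) * partition_fn n h0 h1 J (\<tau>(j := Suc (\<tau> j)))
       \<le> partition_fn n h0 h1 J ((\<tau>(j := Suc (\<tau> j)))(i := Suc ((\<tau>(j := Suc (\<tau> j))) i))) * partition_fn n h0 h1 J \<tau>"
proof -
  define ch where "ch = (exp h1 + exp (- h1)) / 2"
  define sh where "sh = (exp h1 - exp (- h1)) / 2"
  define e where "e \<sigma> = exp (- hamiltonian n h0 h1 J \<tau> \<sigma>)" for \<sigma>
  define A where "A = (\<Sum>\<sigma>\<in>spins n. e \<sigma>)"
  define Bi where "Bi = (\<Sum>\<sigma>\<in>spins n. \<sigma> i * e \<sigma>)"
  define Bj where "Bj = (\<Sum>\<sigma>\<in>spins n. \<sigma> j * e \<sigma>)"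
  define C where "C = (\<Sum>\<sigma>\<in>spins n. (\<sigma> i * \<sigma> j) * e \<sigma>)"
  have es: "exp (h1 * \<sigma> l) = ch + sh * \<sigma> l" if "\<sigma> \<in> spins n" "l < n" for \<sigma> l
    unfolding ch_def sh_def by (rule exp_spin[OF that])
  have ZA: "partition_fn n h0 h1 J \<tau> = A" unfolding partition_fn_def A_def e_def ..
  have Apos: "0 < A" using Z_pos ZA by metis
  have Zi: "partition_fn n h0 h1 J (\<tau>(i := Suc (\<tau> i))) = ch * A + sh * Bi"
  proof -
    have "partition_fn n h0 h1 J (\<tau>(i := Suc (\<tau> i))) = (\<Sum>\<sigma>\<in>spins n. ch * e \<sigma> + sh * (\<sigma> i * e \<sigma>))"
      unfolding Z_shift[OF i] e_def by (intro sum.cong refl) (simp add: es i algebra_simps)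
    then show ?thesis unfolding A_def Bi_def by (simp add: sum.distrib sum_distrib_left)
  qed
  have Zj: "partition_fn n h0 h1 J (\<tau>(j := Suc (\<tau> j))) = ch * A + sh * Bj"
  proof -
    have "partition_fn n h0 h1 J (\<tau>(j := Suc (\<tau> j))) = (\<Sum>\<sigma>\<in>spins n. ch * e \<sigma> + sh * (\<sigma> j * e \<sigma>))"
      unfolding Z_shift[OF j] e_def by (intro sum.cong refl) (simp add: es j algebra_simps)
    then show ?thesis unfolding A_def Bj_def by (simp add: sum.distrib sum_distrib_left)
  qed
  have Zij: "partition_fn n h0 h1 J ((\<tau>(j := Suc (\<tau> j)))(i := Suc ((\<tau>(j := Suc (\<tau> j))) i)))
      = ch * ch * A + ch * sh * Bi + ch * sh * Bj + sh * sh * C"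
  proof -
    have "partition_fn n h0 h1 J ((\<tau>(j := Suc (\<tau> j)))(i := Suc ((\<tau>(j := Suc (\<tau> j))) i)))
        = (\<Sum>\<sigma>\<in>spins n. exp (- hamiltonian n h0 h1 J (\<tau>(j := Suc (\<tau> j))) \<sigma>) * exp (h1 * \<sigma> i))"
      by (rule Z_shift[OF i])
    also have "\<dots> = (\<Sum>\<sigma>\<in>spins n. ch * ch * e \<sigma> + ch * sh * (\<sigma> i * e \<sigma>) + ch * sh * (\<sigma> j * e \<sigma>) + sh * sh * ((\<sigma> i * \<sigma> j) * e \<sigma>))"
    proof (intro sum.cong refl)
      fix \<sigma> assume s: "\<sigma> \<in> spins n"
      have "exp (- hamiltonian n h0 h1 J (\<tau>(j := Suc (\<tau> j))) \<sigma>) * exp (h1 * \<sigma> i)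
          = e \<sigma> * exp (h1 * \<sigma> j) * exp (h1 * \<sigma> i)"
        unfolding ham_shift[OF j] e_def by (simp add: exp_add[symmetric] exp_diff algebra_simps)
      also have "\<dots> = e \<sigma> * (ch + sh * \<sigma> j) * (ch + sh * \<sigma> i)" using s i j by (simp add: es)
      finally show "exp (- hamiltonian n h0 h1 J (\<tau>(j := Suc (\<tau> j))) \<sigma>) * exp (h1 * \<sigma> i) =
          ch * ch * e \<sigma> + ch * sh * (\<sigma> i * e \<sigma>) + ch * sh * (\<sigma> j * e \<sigma>) + sh * sh * ((\<sigma> i * \<sigma> j) * e \<sigma>)"
        by (simp add: algebra_simps)
    qed
    also have "\<dots> = ch * ch * A + ch * sh * Bi + ch * sh * Bj + sh * sh * C"
      unfolding A_def Bi_def Bj_def C_def by (simp add: sum.distrib sum_distrib_left)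
    finally show ?thesis .
  qed
  have g1: "gibbs n h0 h1 J \<tau> (\<lambda>\<sigma>. \<sigma> i * \<sigma> j) = C / A"
    unfolding gibbs_def C_def ZA[symmetric] e_def ..
  have g2: "gibbs n h0 h1 J \<tau> (\<lambda>\<sigma>. \<sigma> i) = Bi / A"
    unfolding gibbs_def Bi_def ZA[symmetric] e_def ..
  have g3: "gibbs n h0 h1 J \<tau> (\<lambda>\<sigma>. \<sigma> j) = Bj / A"
    unfolding gibbs_def Bj_def ZA[symmetric] e_def ..
  have "0 \<le> C / A - Bi / A * (Bj / A)" using corr g1 g2 g3 by simp
  then have "0 \<le> (C / A - Bi / A * (Bj / A)) * (A * A)" using Apos by simp
  also have "(C / A - Bi / A * (Bj / A)) * (A * A) = C * A - Bi * Bj" using Apos by (simp add: field_simps)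
  finally have key: "0 \<le> C * A - Bi * Bj" .
  have "(ch * ch * A + ch * sh * Bi + ch * sh * Bj + sh * sh * C) * A - (ch * A + sh * Bi) * (ch * A + sh * Bj)
      = (sh * sh) * (C * A - Bi * Bj)" by (simp add: algebra_simps)
  also have "\<dots> \<ge> 0" using key by simp
  finally show ?thesis unfolding Zi Zj Zij ZA by simp
qed

lemma DDF_nonneg:
  assumes n: "1 \<le> n"
    and corr: "\<forall>\<tau>. \<forall>i<n. \<forall>j<n. gibbs n h0 h1 J \<tau> (\<lambda>\<sigma>. \<sigma> i * \<sigma> j)
            - gibbs n h0 h1 J \<tau> (\<lambda>\<sigma>. \<sigma> i) * gibbs n h0 h1 J \<tau> (\<lambda>\<sigma>. \<sigma> j) \<ge> 0"
  shows "0 \<le> DF n (DF n (pressure n h0 h1 J)) \<tau>"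
proof -
  let ?P = "pressure n h0 h1 J"
  let ?Z = "partition_fn n h0 h1 J"
  define up where "up k l = k(l := Suc (k l))" for k :: "nat \<Rightarrow> nat" and l
  have "DF n (DF n ?P) \<tau> = (\<Sum>j<n. \<Sum>i<n. ?P (up (up \<tau> j) i) - ?P (up \<tau> j) - ?P (up \<tau> i) + ?P \<tau>)"
    unfolding DF_def up_def by (simp add: sum_subtractf sum.distrib algebra_simps)
  also have "\<dots> \<ge> 0"
  proof (intro sum_nonneg)
    fix i j assume i: "i \<in> {..<n}" and j: "j \<in> {..<n}"
    have pi: "?Z (up \<tau> i) * ?Z (up \<tau> j) \<le> ?Z (up (up \<tau> j) i) * ?Z \<tau>"
      unfolding up_def using corr i j by (intro pair_ineq) auto
    have "ln (?Z (up \<tau> i) * ?Z (up \<tau> j)) \<le> ln (?Z (up (up \<tau> j) i) * ?Z \<tau>)"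
      using pi by (subst ln_le_cancel_iff) (auto intro!: mult_pos_pos Z_pos)
    then have "ln (?Z (up \<tau> i)) + ln (?Z (up \<tau> j)) \<le> ln (?Z (up (up \<tau> j) i)) + ln (?Z \<tau>)"
      using Z_pos[of n h0 h1 J] by (simp add: ln_mult less_imp_neq[symmetric])
    then have "0 \<le> (ln (?Z (up (up \<tau> j) i)) - ln (?Z (up \<tau> j)) - ln (?Z (up \<tau> i)) + ln (?Z \<tau>)) / n"
      by (intro divide_nonneg_nonneg) auto
    then show "0 \<le> ?P (up (up \<tau> j) i) - ?P (up \<tau> j) - ?P (up \<tau> i) + ?P \<tau>"
      unfolding pressure_def by (simp add: add_divide_distrib diff_divide_distrib)
  qed
  finally show ?thesis .
qed

lemma meas_J:
  assumes sets: "\<And>X. sets (M X) = sets borel" and X: "X \<in> Pow {..<n}"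
  shows "(\<lambda>J. J X) \<in> borel_measurable (PiM (Pow {..<n}) M)"
proof -
  have "(\<lambda>J. J X) \<in> measurable (PiM (Pow {..<n}) M) (M X)"
    using X by (rule measurable_component_singleton)
  then show ?thesis using sets measurable_cong_sets by blast
qed

lemma meas_pressure_pair:
  assumes sets: "\<And>X. sets (M X) = sets borel"
  shows "(\<lambda>x. pressure n h0 h1 (fst x) (snd x)) \<in> borel_measurable (PiM (Pow {..<n}) M \<Otimes>\<^sub>M PP n l)"
proof -
  have [measurable]: "(\<lambda>x. fst x X) \<in> borel_measurable (PiM (Pow {..<n}) M \<Otimes>\<^sub>M PP n l)" if "X \<in> Pow {..<n}" for X
  proof -
    have "(\<lambda>J. J X) \<circ> fst \<in> borel_measurable (PiM (Pow {..<n}) M \<Otimes>\<^sub>M PP n l)"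
      by (rule measurable_comp[OF measurable_fst meas_J[of M, OF sets that]])
    then show ?thesis by (simp add: comp_def)
  qed
  have [measurable]: "(\<lambda>x. real (snd x i)) \<in> borel_measurable (PiM (Pow {..<n}) M \<Otimes>\<^sub>M PP n l)" for i
  proof -
    have "(\<lambda>t. real (t i)) \<circ> snd \<in> borel_measurable (PiM (Pow {..<n}) M \<Otimes>\<^sub>M PP n l)"
      by (rule measurable_comp[OF measurable_snd meas_PP])
    then show ?thesis by (simp add: comp_def)
  qed
  show ?thesis
    unfolding pressure_def partition_fn_def hamiltonian_def spin_prod_def
    by measurable
qed

lemma integrable_4pow: "0 < l \<Longrightarrow> integrable (PP n l) (\<lambda>k. (4::real) ^ (\<Sum>i<n. k i))"
  by (rule int_PP) (auto simp: grows_def)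

context
  fixes M :: "nat set \<Rightarrow> real measure" and n :: nat
  assumes Mprob: "\<And>X. prob_space (M X)" and Msets: "\<And>X. sets (M X) = sets borel"
    and Msq: "\<And>X. integrable (M X) (\<lambda>x. x ^ 2)"
begin

lemma JM_prob: "prob_space (PiM (Pow {..<n}) M)"
  by (intro prob_space_PiM Mprob)

lemma int_absJ: assumes X: "X \<in> Pow {..<n}" shows "integrable (PiM (Pow {..<n}) M) (\<lambda>J. \<bar>J X\<bar>)"
proof -
  interpret prob_space "M X" by (rule Mprob)
  have mid: "(\<lambda>x. x) \<in> borel_measurable (M X)" by (subst measurable_cong_sets[OF Msets refl]) simp
  have i0: "integrable (M X) (\<lambda>x. x)" by (rule square_integrable_imp_integrable[OF mid Msq])
  have i1: "integrable (M X) (\<lambda>x. \<bar>x\<bar>)" by (rule integrable_abs[OF i0])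
  have ma: "(\<lambda>x. \<bar>x\<bar>) \<in> borel_measurable (M X)" by (subst measurable_cong_sets[OF Msets refl]) simp
  have d: "distr (PiM (Pow {..<n}) M) (M X) (\<lambda>J. J X) = M X"
    by (rule distr_PiM_component[OF Mprob X])
  have eq: "integrable (distr (PiM (Pow {..<n}) M) (M X) (\<lambda>J. J X)) (\<lambda>x. \<bar>x\<bar>) \<longleftrightarrow> integrable (PiM (Pow {..<n}) M) (\<lambda>J. abs (J X))"
    by (rule integrable_distr_eq[OF measurable_component_singleton[of X "Pow {..<n}" M, OF X] ma])
  show ?thesis using eq i1 unfolding d by simp
qed

lemma int_SJ: "integrable (PiM (Pow {..<n}) M) (\<lambda>J. \<Sum>X\<in>Pow {..<n}. \<bar>J X\<bar>)"
  by (intro Bochner_Integration.integrable_sum int_absJ)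

lemma meas_pressure_J: "(\<lambda>J. pressure n h0 h1 J k) \<in> borel_measurable (PiM (Pow {..<n}) M)"
proof -
  have [measurable]: "(\<lambda>J. J X) \<in> borel_measurable (PiM (Pow {..<n}) M)" if "X \<in> Pow {..<n}" for X
    by (rule meas_J[OF Msets that])
  show ?thesis unfolding pressure_def partition_fn_def hamiltonian_def spin_prod_def by measurable
qed

definition cJ :: "real \<Rightarrow> real \<Rightarrow> (nat set \<Rightarrow> real) \<Rightarrow> real" where
  "cJ h0 h1 J = ln 2 + h0 + h1 + (\<Sum>X\<in>Pow {..<n}. \<bar>J X\<bar>) / n"

lemma cJ_nonneg: "0 \<le> h0 \<Longrightarrow> 0 \<le> h1 \<Longrightarrow> 0 \<le> cJ h0 h1 J"
  unfolding cJ_def by (intro add_nonneg_nonneg divide_nonneg_nonneg sum_nonneg) auto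

lemma int_cJ: "integrable (PiM (Pow {..<n}) M) (cJ h0 h1)"
proof -
  interpret prob_space "PiM (Pow {..<n}) M" by (rule JM_prob)
  show ?thesis unfolding cJ_def
    by (intro Bochner_Integration.integrable_add Bochner_Integration.integrable_divide int_SJ integrable_const)
qed

lemma int_pressure_J:
  assumes n: "1 \<le> n" and h0: "0 \<le> h0" and h1: "0 \<le> h1"
  shows "integrable (PiM (Pow {..<n}) M) (\<lambda>J. pressure n h0 h1 J k)"
proof (rule Bochner_Integration.integrable_bound[OF _ meas_pressure_J])
  show "integrable (PiM (Pow {..<n}) M) (\<lambda>J. cJ h0 h1 J * 4 ^ (\<Sum>i<n. k i))"
    by (intro integrable_mult_left int_cJ)
  show "AE J in PiM (Pow {..<n}) M. norm (pressure n h0 h1 J k) \<le> norm (cJ h0 h1 J * 4 ^ (\<Sum>i<n. k i))"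
  proof (intro AE_I2)
    fix J
    have "\<bar>pressure n h0 h1 J k\<bar> \<le> cJ h0 h1 J * 4 ^ (\<Sum>i<n. k i)"
      unfolding cJ_def by (rule pressure_bound[OF n h0 h1])
    then show "norm (pressure n h0 h1 J k) \<le> norm (cJ h0 h1 J * 4 ^ (\<Sum>i<n. k i))"
      using cJ_nonneg[OF h0 h1, of J] by simp
  qed
qed

lemma int_pair:
  assumes n: "1 \<le> n" and h0: "0 \<le> h0" and h1: "0 \<le> h1" and l: "0 < l"
  shows "integrable (PiM (Pow {..<n}) M \<Otimes>\<^sub>M PP n l) (\<lambda>x. pressure n h0 h1 (fst x) (snd x))"
proof -
  interpret J: prob_space "PiM (Pow {..<n}) M" by (rule JM_prob)
  interpret T: prob_space "PP n l" by (rule prob_PP)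
  interpret pair_sigma_finite "PiM (Pow {..<n}) M" "PP n l" ..
  have mp: "(\<lambda>x. pressure n h0 h1 (fst x) (snd x)) \<in> borel_measurable (PiM (Pow {..<n}) M \<Otimes>\<^sub>M PP n l)"
    by (rule meas_pressure_pair[OF Msets])
  have ip: "integrable (PP n l) (pressure n h0 h1 J)" for J
    by (rule int_PP[OF l grows_pressure[OF n h0 h1]])
  define K4 where "K4 = (\<integral>k. (4::real) ^ (\<Sum>i<n. k i) \<partial>PP n l)"
  show ?thesis
  proof (rule Fubini_integrable[OF mp])
    show "AE x in PiM (Pow {..<n}) M. integrable (PP n l) (\<lambda>y. pressure n h0 h1 (fst (x, y)) (snd (x, y)))"
      using ip by simp
    have mi: "(\<lambda>x. \<integral>y. norm (pressure n h0 h1 (fst (x, y)) (snd (x, y))) \<partial>PP n l) \<in> borel_measurable (PiM (Pow {..<n}) M)"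
    proof (rule T.borel_measurable_lebesgue_integral)
      show "(\<lambda>(x, y). norm (pressure n h0 h1 (fst (x, y)) (snd (x, y)))) \<in> borel_measurable (PiM (Pow {..<n}) M \<Otimes>\<^sub>M PP n l)"
        using measurable_compose[OF mp borel_measurable_norm] by (simp add: case_prod_beta')
    qed
    show "integrable (PiM (Pow {..<n}) M) (\<lambda>x. \<integral>y. norm (pressure n h0 h1 (fst (x, y)) (snd (x, y))) \<partial>PP n l)"
    proof (rule Bochner_Integration.integrable_bound[OF _ mi])
      show "integrable (PiM (Pow {..<n}) M) (\<lambda>J. cJ h0 h1 J * K4)"
        by (intro integrable_mult_left int_cJ)
      show "AE J in PiM (Pow {..<n}) M. norm (\<integral>y. norm (pressure n h0 h1 (fst (J, y)) (snd (J, y))) \<partial>PP n l) \<le> norm (cJ h0 h1 J * K4)"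
      proof (intro AE_I2)
        fix J
        have "(\<integral>y. norm (pressure n h0 h1 J y) \<partial>PP n l) \<le> (\<integral>y. cJ h0 h1 J * 4 ^ (\<Sum>i<n. y i) \<partial>PP n l)"
          using pressure_bound[OF n h0 h1] unfolding cJ_def
          by (intro integral_mono integrable_norm ip integrable_mult_right integrable_4pow l) auto
        also have "\<dots> = cJ h0 h1 J * K4" unfolding K4_def by simp
        finally have a: "(\<integral>y. norm (pressure n h0 h1 J y) \<partial>PP n l) \<le> cJ h0 h1 J * K4" .
        have "0 \<le> (\<integral>y. norm (pressure n h0 h1 J y) \<partial>PP n l)" by (rule Bochner_Integration.integral_nonneg) auto
        then show "norm (\<integral>y. norm (pressure n h0 h1 (fst (J, y)) (snd (J, y))) \<partial>PP n l) \<le> norm (cJ h0 h1 J * K4)"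
          using a by simp
      qed
    qed
  qed
qed

lemma fubini_pressure:
  assumes n: "1 \<le> n" and h0: "0 \<le> h0" and h1: "0 \<le> h1" and l: "0 < l"
  shows "(\<integral>J. (\<integral>k. pressure n h0 h1 J k \<partial>PP n l) \<partial>PiM (Pow {..<n}) M)
       = (\<integral>k. (\<integral>J. pressure n h0 h1 J k \<partial>PiM (Pow {..<n}) M) \<partial>PP n l)"
proof -
  interpret J: prob_space "PiM (Pow {..<n}) M" by (rule JM_prob)
  interpret T: prob_space "PP n l" by (rule prob_PP)
  interpret pair_sigma_finite "PiM (Pow {..<n}) M" "PP n l" ..
  have "integrable (PiM (Pow {..<n}) M \<Otimes>\<^sub>M PP n l) (case_prod (pressure n h0 h1))"
    using int_pair[OF n h0 h1 l] by (simp add: case_prod_beta')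
  from Fubini_integral[OF this] show ?thesis by simp
qed

lemma meas_Phat:
  "(\<lambda>J. \<integral>k. pressure n h0 h1 J k \<partial>PP n l) \<in> borel_measurable (PiM (Pow {..<n}) M)"
proof -
  interpret T: prob_space "PP n l" by (rule prob_PP)
  have "(\<lambda>x. pressure n h0 h1 (fst x) (snd x)) \<in> borel_measurable (PiM (Pow {..<n}) M \<Otimes>\<^sub>M PP n l)"
    by (rule meas_pressure_pair[OF Msets])
  then show ?thesis
    by (intro T.borel_measurable_lebesgue_integral) (simp add: case_prod_beta')
qed

lemma DF_int:
  assumes ig: "\<And>k. integrable (PiM (Pow {..<n}) M) (\<lambda>J. G J k)"
  shows "DF n (\<lambda>k. \<integral>J. G J k \<partial>PiM (Pow {..<n}) M) k = (\<integral>J. DF n (G J) k \<partial>PiM (Pow {..<n}) M)"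
    and "integrable (PiM (Pow {..<n}) M) (\<lambda>J. DF n (G J) k)"
proof -
  show "integrable (PiM (Pow {..<n}) M) (\<lambda>J. DF n (G J) k)"
    unfolding DF_def by (intro Bochner_Integration.integrable_sum Bochner_Integration.integrable_diff ig)
  show "DF n (\<lambda>k. \<integral>J. G J k \<partial>PiM (Pow {..<n}) M) k = (\<integral>J. DF n (G J) k \<partial>PiM (Pow {..<n}) M)"
    unfolding DF_def
    by (subst Bochner_Integration.integral_sum) (auto intro!: sum.cong Bochner_Integration.integral_diff[symmetric] Bochner_Integration.integrable_diff ig)
qed

end

lemma mono_from_deriv:
  fixes f f' :: "real \<Rightarrow> real"
  assumes "a \<le> b" and d: "\<And>x. a \<le> x \<Longrightarrow> x \<le> b \<Longrightarrow> DERIV f x :> f' x" and nn: "\<And>x. a \<le> x \<Longrightarrow> x \<le> b \<Longrightarrow> 0 \<le> f' x"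
  shows "f a \<le> f b"
proof (cases "a = b")
  case False
  then have "a < b" using assms by simp
  from MVT2[OF this d] obtain z where "a < z" "z < b" "f b - f a = (b - a) * f' z" by auto
  moreover have "0 \<le> f' z" using nn \<open>a < z\<close> \<open>z < b\<close> by simp
  moreover have "0 \<le> (b - a) * f' z" using \<open>a < b\<close> \<open>0 \<le> f' z\<close> by simp
  ultimately show ?thesis by linarith
qed simp

lemma convex_bounds:
  fixes f g f1 g1 :: "real \<Rightarrow> real"
  assumes dl: "0 < d"
    and df: "\<And>x. \<alpha> - d \<le> x \<Longrightarrow> x \<le> \<alpha> + d \<Longrightarrow> DERIV f x :> f1 x"
    and dg: "\<And>x. \<alpha> - d \<le> x \<Longrightarrow> x \<le> \<alpha> + d \<Longrightarrow> DERIV g x :> g1 x"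
    and mf: "\<And>x y. \<alpha> - d \<le> x \<Longrightarrow> x \<le> y \<Longrightarrow> y \<le> \<alpha> + d \<Longrightarrow> f1 x \<le> f1 y"
    and mg: "\<And>x y. \<alpha> - d \<le> x \<Longrightarrow> x \<le> y \<Longrightarrow> y \<le> \<alpha> + d \<Longrightarrow> g1 x \<le> g1 y"
  shows "(f1 \<alpha> - g1 \<alpha>)^2 \<le> 4 * ((f (\<alpha>+d) - g (\<alpha>+d))^2 + 2 * (f \<alpha> - g \<alpha>)^2 + (f (\<alpha>-d) - g (\<alpha>-d))^2) / d^2
          + 2 * (g1 (\<alpha>+d) - g1 \<alpha>)^2 + 2 * (g1 \<alpha> - g1 (\<alpha>-d))^2"
proof -
  have a1: "\<alpha> < \<alpha> + d" "\<alpha> - d < \<alpha>" using dl by auto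
  obtain z1 where z1: "\<alpha> < z1" "z1 < \<alpha> + d" "f (\<alpha>+d) - f \<alpha> = d * f1 z1"
    using MVT2[OF a1(1), of f f1] df dl by force
  obtain z2 where z2: "\<alpha> < z2" "z2 < \<alpha> + d" "g (\<alpha>+d) - g \<alpha> = d * g1 z2"
    using MVT2[OF a1(1), of g g1] dg dl by force
  obtain z3 where z3: "\<alpha> - d < z3" "z3 < \<alpha>" "f \<alpha> - f (\<alpha>-d) = d * f1 z3"
    using MVT2[OF a1(2), of f f1] df dl by force
  obtain z4 where z4: "\<alpha> - d < z4" "z4 < \<alpha>" "g \<alpha> - g (\<alpha>-d) = d * g1 z4"
    using MVT2[OF a1(2), of g g1] dg dl by force
  have i1: "d * f1 \<alpha> \<le> f (\<alpha>+d) - f \<alpha>" using z1 mf[of \<alpha> z1] dl by (simp add: mult_left_mono)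
  have i2: "g (\<alpha>+d) - g \<alpha> \<le> d * g1 (\<alpha>+d)" using z2 mg[of z2 "\<alpha>+d"] dl by (simp add: mult_left_mono)
  have i3: "f \<alpha> - f (\<alpha>-d) \<le> d * f1 \<alpha>" using z3 mf[of z3 \<alpha>] dl by (simp add: mult_left_mono)
  have i4: "d * g1 (\<alpha>-d) \<le> g \<alpha> - g (\<alpha>-d)" using z4 mg[of "\<alpha>-d" z4] dl by (simp add: mult_left_mono)
  define ep where "ep = f (\<alpha>+d) - g (\<alpha>+d)"
  define e0 where "e0 = f \<alpha> - g \<alpha>"
  define em where "em = f (\<alpha>-d) - g (\<alpha>-d)"
  define u where "u = (ep - e0) / d"
  define v where "v = (e0 - em) / d"
  define p where "p = g1 (\<alpha>+d) - g1 \<alpha>"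
  define q where "q = g1 \<alpha> - g1 (\<alpha>-d)"
  define D where "D = f1 \<alpha> - g1 \<alpha>"
  have du: "d * u = ep - e0" unfolding u_def using dl by simp
  have dv: "d * v = e0 - em" unfolding v_def using dl by simp
  have dD: "d * D = d * f1 \<alpha> - d * g1 \<alpha>" by (simp add: D_def right_diff_distrib)
  have dp: "d * p = d * g1 (\<alpha>+d) - d * g1 \<alpha>" by (simp add: p_def right_diff_distrib)
  have dq: "d * q = d * g1 \<alpha> - d * g1 (\<alpha>-d)" by (simp add: q_def right_diff_distrib)
  have "d * D \<le> d * (u + p)"
    using i1 i2 du dD dp unfolding ep_def e0_def distrib_left by linarith
  then have up: "D \<le> u + p" using dl by simp
  have "d * (- D) \<le> d * (q - v)"
    using i3 i4 dv dD dq unfolding em_def e0_def right_diff_distrib by linarith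
  then have qv: "- D \<le> q - v" using dl mult_le_cancel_left_pos[of d "- D" "q - v"] by simp
  have "D^2 \<le> (u + p)^2 + (q - v)^2"
  proof (cases "0 \<le> D")
    case True
    then have "D^2 \<le> (u+p)^2" using up by (intro power_mono) auto
    then show ?thesis using zero_le_power2[of "q-v"] by linarith
  next
    case False
    then have "(-D)^2 \<le> (q-v)^2" using qv by (intro power_mono) auto
    then have "D^2 \<le> (q-v)^2" by simp
    then show ?thesis using zero_le_power2[of "u+p"] by linarith
  qed
  also have "\<dots> \<le> 2 * u^2 + 2 * p^2 + 2 * q^2 + 2 * v^2"
  proof -
    have "(2 * u^2 + 2 * p^2 + 2 * q^2 + 2 * v^2) - ((u + p)^2 + (q - v)^2) = (u-p)^2 + (q+v)^2"
      by (simp add: power2_eq_square algebra_simps)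
    moreover have "0 \<le> (u-p)^2 + (q+v)^2" by simp
    ultimately show ?thesis by linarith
  qed
  also have "2 * u^2 + 2 * v^2 \<le> 4 * (ep^2 + 2 * e0^2 + em^2) / d^2"
  proof -
    have "2 * u^2 + 2 * v^2 = (2 * (ep - e0)^2 + 2 * (e0 - em)^2) / d^2"
      unfolding u_def v_def by (simp add: power_divide add_divide_distrib)
    moreover have "2 * (ep - e0)^2 + 2 * (e0 - em)^2 \<le> 4 * (ep^2 + 2 * e0^2 + em^2)"
    proof -
      have "4 * (ep^2 + 2 * e0^2 + em^2) - (2 * (ep - e0)^2 + 2 * (e0 - em)^2) = 2 * (ep + e0)^2 + 2 * (e0 + em)^2"
        by (simp add: power2_eq_square algebra_simps)
      moreover have "0 \<le> 2 * (ep + e0)^2 + 2 * (e0 + em)^2" by simp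
      ultimately show ?thesis by linarith
    qed
    ultimately show ?thesis by (simp add: divide_right_mono)
  qed
  then have "2 * u^2 + 2 * p^2 + 2 * q^2 + 2 * v^2 \<le> 4 * (ep^2 + 2 * e0^2 + em^2) / d^2 + 2 * p^2 + 2 * q^2"
    by linarith
  finally show ?thesis unfolding D_def ep_def e0_def em_def p_def q_def .
qed

lemma EF_abs_le:
  assumes l: "0 < l" and b: "\<And>k. \<bar>F k\<bar> \<le> c"
  shows "\<bar>EF n F l\<bar> \<le> c"
proof -
  interpret prob_space "PP n l" by (rule prob_PP)
  have c: "0 \<le> c" using b[of undefined] by simp
  have g: "grows n F" unfolding grows_def
  proof (intro exI[of _ c] ballI)
    fix k :: "nat \<Rightarrow> nat"
    have "c \<le> c * 4 ^ (\<Sum>i<n. k i)" using c by (simp add: mult_le_cancel_left1)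
    then show "\<bar>F k\<bar> \<le> c * 4 ^ (\<Sum>i<n. k i)" using b[of k] by linarith
  qed
  have i: "integrable (PP n l) F" by (rule int_PP[OF l g])
  have "(\<integral>k. F k \<partial>PP n l) \<le> c" using b by (intro integral_le_const i AE_I2) (auto simp: abs_le_iff)
  moreover have "(\<integral>k. - F k \<partial>PP n l) \<le> c" using b by (intro integral_le_const AE_I2 integrable_minus i) (auto simp: abs_le_iff)
  ultimately show ?thesis unfolding EF_def by (simp add: abs_le_iff)
qed

lemma EF_nonneg:
  assumes "\<And>k. 0 \<le> F k" shows "0 \<le> EF n F l"
  unfolding EF_def using assms by (intro Bochner_Integration.integral_nonneg) auto

context
  fixes M :: "nat set \<Rightarrow> real measure" and n :: nat and \<theta> h0 h1 :: real
  assumes Mprob: "\<And>X. prob_space (M X)" and Msets: "\<And>X. sets (M X) = sets borel"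
    and Msq: "\<And>X. integrable (M X) (\<lambda>x. x ^ 2)"
    and n1: "1 \<le> n" and h0: "0 \<le> h0" and h1: "0 \<le> h1"
begin

definition sc :: real where "sc = real n powr (\<theta> - 1)"

lemma sc_pos: "0 < sc" unfolding sc_def using n1 by simp

definition Fbar :: "(nat \<Rightarrow> nat) \<Rightarrow> real" where
  "Fbar k = (\<integral>J. pressure n h0 h1 J k \<partial>PiM (Pow {..<n}) M)"

lemma Phat_eq: "Phat n \<theta> h0 h1 J \<alpha> = EF n (pressure n h0 h1 J) (\<alpha> * sc)"
  by (simp add: Phat_def tau_law_def EF_def PP_def sc_def)

lemma pavg_eq: assumes "0 < \<alpha>" shows "pavg (PiM (Pow {..<n}) M) n \<theta> h0 h1 \<alpha> = EF n Fbar (\<alpha> * sc)"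
proof -
  have l: "0 < \<alpha> * sc" using assms sc_pos by simp
  show ?thesis
    unfolding pavg_def Phat_eq EF_def Fbar_def
    by (rule fubini_pressure[OF Mprob Msets Msq n1 h0 h1 l])
qed

lemma int_P: "integrable (PiM (Pow {..<n}) M) (\<lambda>J. pressure n h0 h1 J k)"
  by (rule int_pressure_J[OF Mprob Msets Msq n1 h0 h1])

lemma grows_Fbar: "grows n Fbar"
proof -
  interpret J: prob_space "PiM (Pow {..<n}) M" by (rule JM_prob[OF Mprob Msets Msq])
  define C where "C = (\<integral>J. cJ n h0 h1 J \<partial>PiM (Pow {..<n}) M)"
  have ic: "integrable (PiM (Pow {..<n}) M) (cJ n h0 h1)" by (rule int_cJ[OF Mprob Msets Msq])
  have "\<bar>Fbar k\<bar> \<le> C * 4 ^ (\<Sum>i<n. k i)" for k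
  proof -
    have "\<bar>Fbar k\<bar> \<le> (\<integral>J. cJ n h0 h1 J * 4 ^ (\<Sum>i<n. k i) \<partial>PiM (Pow {..<n}) M)"
    proof -
      have pb: "\<And>J. \<bar>pressure n h0 h1 J k\<bar> \<le> cJ n h0 h1 J * 4 ^ (\<Sum>i<n. k i)"
        using pressure_bound[OF n1 h0 h1] by (simp add: cJ_def[OF Mprob Msets Msq])
      have "\<bar>Fbar k\<bar> \<le> (\<integral>J. norm (pressure n h0 h1 J k) \<partial>PiM (Pow {..<n}) M)"
        unfolding Fbar_def using integral_norm_bound[of "PiM (Pow {..<n}) M" "\<lambda>J. pressure n h0 h1 J k"] by simp
      also have "\<dots> \<le> (\<integral>J. cJ n h0 h1 J * 4 ^ (\<Sum>i<n. k i) \<partial>PiM (Pow {..<n}) M)"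
        by (intro integral_mono integrable_norm int_P integrable_mult_left[OF ic])
           (use pb in auto)
      finally show ?thesis .
    qed
    also have "\<dots> = C * 4 ^ (\<Sum>i<n. k i)" unfolding C_def by simp
    finally show ?thesis .
  qed
  then show ?thesis unfolding grows_def by blast
qed

lemma DF_Fbar: "DF n Fbar = (\<lambda>k. \<integral>J. DF n (pressure n h0 h1 J) k \<partial>PiM (Pow {..<n}) M)"
  unfolding Fbar_def by (rule ext, rule DF_int(1)[OF Mprob Msets Msq int_P])

lemma DDF_Fbar: "DF n (DF n Fbar) k = (\<integral>J. DF n (DF n (pressure n h0 h1 J)) k \<partial>PiM (Pow {..<n}) M)"
  unfolding DF_Fbar
  by (rule DF_int(1)[OF Mprob Msets Msq DF_int(2)[OF Mprob Msets Msq int_P]])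

lemma DF_Fbar_bound: "\<bar>DF n Fbar k\<bar> \<le> h1"
proof -
  interpret J: prob_space "PiM (Pow {..<n}) M" by (rule JM_prob[OF Mprob Msets Msq])
  have i: "integrable (PiM (Pow {..<n}) M) (\<lambda>J. DF n (pressure n h0 h1 J) k)"
    by (rule DF_int(2)[OF Mprob Msets Msq int_P])
  have "(\<integral>J. DF n (pressure n h0 h1 J) k \<partial>PiM (Pow {..<n}) M) \<le> h1"
    using DF_pressure_bound[OF n1 h1] by (intro J.integral_le_const i AE_I2) (auto simp: abs_le_iff)
  moreover have "(\<integral>J. - DF n (pressure n h0 h1 J) k \<partial>PiM (Pow {..<n}) M) \<le> h1"
    using DF_pressure_bound[OF n1 h1] by (intro J.integral_le_const AE_I2 integrable_minus i) (auto simp: abs_le_iff)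
  ultimately show ?thesis unfolding DF_Fbar by (simp add: abs_le_iff)
qed

lemma DDF_Fbar_nonneg:
  assumes corr: "AE J in PiM (Pow {..<n}) M. \<forall>\<tau>. \<forall>i<n. \<forall>j<n.
            gibbs n h0 h1 J \<tau> (\<lambda>\<sigma>. \<sigma> i * \<sigma> j)
            - gibbs n h0 h1 J \<tau> (\<lambda>\<sigma>. \<sigma> i) * gibbs n h0 h1 J \<tau> (\<lambda>\<sigma>. \<sigma> j) \<ge> 0"
  shows "0 \<le> DF n (DF n Fbar) k"
proof -
  have "AE J in PiM (Pow {..<n}) M. 0 \<le> DF n (DF n (pressure n h0 h1 J)) k"
    using corr by eventually_elim (rule DDF_nonneg[OF n1])
  then show ?thesis unfolding DDF_Fbar by (rule integral_nonneg_AE)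
qed

definition f1 :: "(nat set \<Rightarrow> real) \<Rightarrow> real \<Rightarrow> real" where
  "f1 J \<alpha> = sc * EF n (DF n (pressure n h0 h1 J)) (\<alpha> * sc)"

definition g1 :: "real \<Rightarrow> real" where
  "g1 \<alpha> = sc * EF n (DF n Fbar) (\<alpha> * sc)"

lemma chain_sc:
  assumes "0 < \<alpha>" and g: "grows n F"
  shows "((\<lambda>\<alpha>. EF n F (\<alpha> * sc)) has_field_derivative sc * EF n (DF n F) (\<alpha> * sc)) (at \<alpha>)"
proof -
  have l: "0 < \<alpha> * sc" using assms sc_pos by simp
  have d1: "((\<lambda>\<alpha>. \<alpha> * sc) has_field_derivative sc) (at \<alpha>)" by (auto intro!: derivative_eq_intros)
  show ?thesis using DERIV_chain2[OF deriv_EF[OF l g] d1] by (simp add: mult.commute)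
qed

lemma deriv_Phat: "0 < \<alpha> \<Longrightarrow> (Phat n \<theta> h0 h1 J has_field_derivative f1 J \<alpha>) (at \<alpha>)"
  unfolding f1_def Phat_eq[abs_def] by (rule chain_sc[OF _ grows_pressure[OF n1 h0 h1]])

lemma deriv_f1: "0 < \<alpha> \<Longrightarrow> (f1 J has_field_derivative sc * (sc * EF n (DF n (DF n (pressure n h0 h1 J))) (\<alpha> * sc))) (at \<alpha>)"
  unfolding f1_def[abs_def]
  by (intro DERIV_cmult chain_sc grows_DF grows_pressure n1 h0 h1)

lemma deriv_pavg: assumes a: "0 < \<alpha>" shows "(pavg (PiM (Pow {..<n}) M) n \<theta> h0 h1 has_field_derivative g1 \<alpha>) (at \<alpha>)"
proof -
  have "((\<lambda>\<alpha>. EF n Fbar (\<alpha> * sc)) has_field_derivative g1 \<alpha>) (at \<alpha>)"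
    unfolding g1_def by (rule chain_sc[OF a grows_Fbar])
  then show ?thesis
    by (rule has_field_derivative_transform_within_open[of _ _ _ "{0<..}"]) (use a pavg_eq in auto)
qed

lemma deriv_g1: "0 < \<alpha> \<Longrightarrow> (g1 has_field_derivative sc * (sc * EF n (DF n (DF n Fbar)) (\<alpha> * sc))) (at \<alpha>)"
  unfolding g1_def[abs_def]
  by (intro DERIV_cmult chain_sc grows_DF grows_Fbar)

lemma g1_bound: "0 < \<alpha> \<Longrightarrow> \<bar>g1 \<alpha>\<bar> \<le> sc * h1"
proof -
  assume a: "0 < \<alpha>"
  have "\<bar>EF n (DF n Fbar) (\<alpha> * sc)\<bar> \<le> h1"
    using a sc_pos by (intro EF_abs_le DF_Fbar_bound) auto
  then show ?thesis unfolding g1_def using sc_pos by (simp add: abs_mult mult_left_mono)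
qed

end

lemma grows_sq_pressure:
  assumes n: "1 \<le> n" and h0: "0 \<le> h0" and h1: "0 \<le> h1"
  shows "grows n (\<lambda>\<tau>. (pressure n h0 h1 J \<tau> - p) ^ 2)"
proof -
  define c where "c = ln 2 + h0 + h1 + (\<Sum>X\<in>Pow {..<n}. \<bar>J X\<bar>) / n"
  have c: "0 \<le> c" unfolding c_def using h0 h1 by (intro add_nonneg_nonneg divide_nonneg_nonneg sum_nonneg) auto
  have "\<bar>(pressure n h0 h1 J k - p) ^ 2\<bar> \<le> (c + \<bar>p\<bar>)^2 * 4 ^ (\<Sum>i<n. k i)" for k
  proof -
    define t where "t = (2::real) ^ (\<Sum>i<n. k i)"
    have t1: "1 \<le> t" unfolding t_def by simp
    have pb: "\<bar>pressure n h0 h1 J k\<bar> \<le> c * t" unfolding c_def t_def by (rule pressure_bound2[OF n h0 h1])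
    have "\<bar>pressure n h0 h1 J k - p\<bar> \<le> c * t + \<bar>p\<bar> * t"
      using pb t1 mult_left_mono[OF t1, of "\<bar>p\<bar>"] by linarith
    also have "\<dots> = (c + \<bar>p\<bar>) * t" by (simp add: algebra_simps)
    finally have "\<bar>pressure n h0 h1 J k - p\<bar> \<le> (c + \<bar>p\<bar>) * t" .
    then have "\<bar>pressure n h0 h1 J k - p\<bar>^2 \<le> ((c + \<bar>p\<bar>) * t)^2" by (intro power_mono) auto
    also have "((c + \<bar>p\<bar>) * t)^2 = (c + \<bar>p\<bar>)^2 * 4 ^ (\<Sum>i<n. k i)"
    proof -
      have "t^2 = 4 ^ (\<Sum>i<n. k i)" unfolding t_def by (simp add: power_mult[symmetric] power_mult_distrib mult.commute[of _ 2] power_mult)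
      then show ?thesis by (simp add: power_mult_distrib)
    qed
    finally show ?thesis by simp
  qed
  then show ?thesis unfolding grows_def by blast
qed

lemma jensen_pressure:
  assumes n: "1 \<le> n" and h0: "0 \<le> h0" and h1: "0 \<le> h1" and l: "0 < l"
  shows "ennreal ((EF n (pressure n h0 h1 J) l - p) ^ 2) \<le> (\<integral>\<^sup>+\<tau>. ennreal ((pressure n h0 h1 J \<tau> - p) ^ 2) \<partial>PP n l)"
proof -
  interpret prob_space "PP n l" by (rule prob_PP)
  define X where "X \<tau> = pressure n h0 h1 J \<tau> - p" for \<tau>
  have iP: "integrable (PP n l) (pressure n h0 h1 J)" by (rule int_PP[OF l grows_pressure[OF n h0 h1]])
  have iX: "integrable (PP n l) X" unfolding X_def by (intro Bochner_Integration.integrable_diff iP integrable_const)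
  have iX2: "integrable (PP n l) (\<lambda>\<tau>. (X \<tau>)^2)" unfolding X_def by (rule int_PP[OF l grows_sq_pressure[OF n h0 h1]])
  have EX: "expectation X = EF n (pressure n h0 h1 J) l - p"
    unfolding X_def EF_def using iP by (simp add: prob_space)
  have "(expectation X)^2 \<le> expectation (\<lambda>\<tau>. (X \<tau>)^2)"
    using variance_eq[OF iX iX2] variance_positive[of X] by simp
  then have "ennreal ((EF n (pressure n h0 h1 J) l - p) ^ 2) \<le> ennreal (expectation (\<lambda>\<tau>. (X \<tau>)^2))"
    using EX by (intro ennreal_leI) simp
  also have "ennreal (expectation (\<lambda>\<tau>. (X \<tau>)^2)) = (\<integral>\<^sup>+\<tau>. ennreal ((X \<tau>) ^ 2) \<partial>PP n l)"
    by (rule nn_integral_eq_integral[symmetric]) (use iX2 in auto)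
  finally show ?thesis unfolding X_def .
qed

lemma ftc_shift:
  fixes F f :: "real \<Rightarrow> real"
  assumes ab: "a \<le> b" and d: "\<And>x. x \<in> {a..b} \<Longrightarrow> (F has_real_derivative f (x + c)) (at (x + c))"
  shows "((\<lambda>x. f (x + c)) has_integral (F (b + c) - F (a + c))) {a..b}"
proof -
  have "((\<lambda>x. F (x + c)) has_vector_derivative f (x + c)) (at x within {a..b})" if "x \<in> {a..b}" for x
  proof -
    have i: "((\<lambda>x. x + c) has_real_derivative 1) (at x)" by (auto intro!: derivative_eq_intros)
    have "((\<lambda>x. F (x + c)) has_real_derivative f (x + c) * 1) (at x)" by (rule DERIV_chain2[OF d[OF that] i])
    then have "((\<lambda>x. F (x + c)) has_vector_derivative f (x + c)) (at x)"
      by (simp add: has_real_derivative_iff_has_vector_derivative)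
    then show ?thesis by (rule has_vector_derivative_at_within)
  qed
  then show ?thesis using fundamental_theorem_of_calculus[OF ab, of "\<lambda>x. F (x + c)" "\<lambda>x. f (x + c)"] by simp
qed

lemma mvt_bound:
  fixes F f :: "real \<Rightarrow> real"
  assumes d: "0 < d" and der: "\<And>x. t - d \<le> x \<Longrightarrow> x \<le> t + d \<Longrightarrow> (F has_real_derivative f x) (at x)"
    and b: "\<And>x. t - d \<le> x \<Longrightarrow> x \<le> t + d \<Longrightarrow> \<bar>f x\<bar> \<le> L"
  shows "\<bar>F (t + d) - F (t - d)\<bar> \<le> 2 * d * L"
proof -
  have "t - d < t + d" using d by simp
  from MVT2[OF this der] obtain z where z: "t - d < z" "z < t + d" "F (t + d) - F (t - d) = (t + d - (t - d)) * f z"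
    by auto
  have "\<bar>f z\<bar> \<le> L" using b z by simp
  then show ?thesis using z(3) d by (simp add: abs_mult mult_left_mono)
qed

context
  fixes M :: "nat set \<Rightarrow> real measure" and n :: nat and \<theta> h0 h1 CP :: real
  assumes Mprob: "\<And>X. prob_space (M X)" and Msets: "\<And>X. sets (M X) = sets borel"
    and Msq: "\<And>X. integrable (M X) (\<lambda>x. x ^ 2)"
    and n1: "1 \<le> n" and h0: "0 \<le> h0" and h1: "0 \<le> h1" and CP: "0 \<le> CP"
    and corr: "AE J in PiM (Pow {..<n}) M. \<forall>\<tau>. \<forall>i<n. \<forall>j<n.
            gibbs n h0 h1 J \<tau> (\<lambda>\<sigma>. \<sigma> i * \<sigma> j)
            - gibbs n h0 h1 J \<tau> (\<lambda>\<sigma>. \<sigma> i) * gibbs n h0 h1 J \<tau> (\<lambda>\<sigma>. \<sigma> j) \<ge> 0"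
    and concx: "\<And>\<alpha>. 0 < \<alpha> \<Longrightarrow> \<alpha> < 1 \<Longrightarrow>
            (\<integral>\<^sup>+J. \<integral>\<^sup>+\<tau>. ennreal ((pressure n h0 h1 J \<tau> - pavg (PiM (Pow {..<n}) M) n \<theta> h0 h1 \<alpha>) ^ 2)
               \<partial>tau_law n \<theta> \<alpha> \<partial>PiM (Pow {..<n}) M) \<le> ennreal (CP / real n)"
begin

lemmas A6 = Mprob Msets Msq n1 h0 h1
lemmas sc_pos' = sc_pos[OF A6]
lemmas Phat_eq' = Phat_eq[OF A6]
lemmas deriv_f1' = deriv_f1[OF A6]
lemmas deriv_g1' = deriv_g1[OF A6]
lemmas deriv_Phat' = deriv_Phat[OF A6]
lemmas deriv_pavg' = deriv_pavg[OF A6]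
lemmas g1_bound' = g1_bound[OF A6]
lemma sc_nn: "0 \<le> sc n \<theta>" using sc_pos'[of \<theta>] by simp

abbreviation "JMn \<equiv> PiM (Pow {..<n}) M"
abbreviation "g1n \<equiv> g1 M n \<theta> h0 h1"
abbreviation "f1n \<equiv> f1 n \<theta> h0 h1"
abbreviation "pv \<equiv> pavg (PiM (Pow {..<n}) M) n \<theta> h0 h1"

lemma err_bound:
  assumes "0 < x" "x < 1"
  shows "(\<integral>\<^sup>+J. ennreal ((Phat n \<theta> h0 h1 J x - pv x) ^ 2) \<partial>JMn) \<le> ennreal (CP / real n)"
proof -
  have l: "0 < x * (sc n \<theta>)" using assms sc_pos' by simp
  have tl: "tau_law n \<theta> x = PP n (x * (sc n \<theta>))" by (simp add: tau_law_def PP_def sc_def[OF A6])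
  have "(\<integral>\<^sup>+J. ennreal ((Phat n \<theta> h0 h1 J x - pv x) ^ 2) \<partial>JMn)
      \<le> (\<integral>\<^sup>+J. \<integral>\<^sup>+\<tau>. ennreal ((pressure n h0 h1 J \<tau> - pv x) ^ 2) \<partial>tau_law n \<theta> x \<partial>JMn)"
    unfolding tl Phat_eq' by (intro nn_integral_mono jensen_pressure[OF n1 h0 h1 l])
  also have "\<dots> \<le> ennreal (CP / real n)" by (rule concx[OF assms])
  finally show ?thesis .
qed

lemma meas_err: "(\<lambda>J. ennreal ((Phat n \<theta> h0 h1 J x - c) ^ 2)) \<in> borel_measurable JMn"
proof -
  have [measurable]: "(\<lambda>J. Phat n \<theta> h0 h1 J x) \<in> borel_measurable JMn"
    unfolding Phat_eq' EF_def by (rule meas_Phat[OF Mprob Msets Msq])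
  show ?thesis by measurable
qed

lemma g1_mono: assumes "0 < x" "x \<le> y" shows "g1n x \<le> g1n y"
  by (rule mono_from_deriv[OF assms(2) deriv_g1'])
     (use assms sc_nn in \<open>auto intro!: mult_nonneg_nonneg EF_nonneg DDF_Fbar_nonneg[OF Mprob Msets Msq n1 h0 h1 corr]\<close>)

lemma f1_mono:
  assumes cJ: "\<forall>\<tau>. \<forall>i<n. \<forall>j<n. gibbs n h0 h1 J \<tau> (\<lambda>\<sigma>. \<sigma> i * \<sigma> j)
            - gibbs n h0 h1 J \<tau> (\<lambda>\<sigma>. \<sigma> i) * gibbs n h0 h1 J \<tau> (\<lambda>\<sigma>. \<sigma> j) \<ge> 0"
    and "0 < x" "x \<le> y" shows "f1n J x \<le> f1n J y"
  by (rule mono_from_deriv[OF assms(3) deriv_f1'])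
     (use assms sc_nn in \<open>auto intro!: mult_nonneg_nonneg EF_nonneg DDF_nonneg[OF n1 cJ]\<close>)

lemma alpha_bound:
  assumes d: "0 < d" and lo: "0 < \<alpha> - d" and hi: "\<alpha> + d < 1"
  shows "(\<integral>\<^sup>+J. ennreal ((deriv (Phat n \<theta> h0 h1 J) \<alpha> - deriv pv \<alpha>)^2) \<partial>JMn)
     \<le> ennreal (16 * CP / (real n * d^2) + 4 * (sc n \<theta> * h1) * (g1n (\<alpha>+d) - g1n (\<alpha>-d)))"
proof -
  interpret J: prob_space JMn by (rule JM_prob[OF Mprob Msets Msq])
  define L where "L = sc n \<theta> * h1"
  define K where "K = 4 * L * (g1n (\<alpha>+d) - g1n (\<alpha>-d))"
  define e where "e J x = Phat n \<theta> h0 h1 J x - pv x" for J x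
  have L: "0 \<le> L" unfolding L_def using sc_nn h1 by simp
  have a0: "0 < \<alpha>" using lo d by simp
  have gm: "g1n (\<alpha>-d) \<le> g1n \<alpha>" "g1n \<alpha> \<le> g1n (\<alpha>+d)" using g1_mono lo d by auto
  have gb: "\<bar>g1n x\<bar> \<le> L" if "0 < x" for x unfolding L_def by (rule g1_bound'[OF that])
  have K: "0 \<le> K" unfolding K_def using L gm by simp
  have dpv: "deriv pv \<alpha> = g1n \<alpha>" by (rule DERIV_imp_deriv[OF deriv_pavg'[OF a0]])
  have pt: "AE J in JMn. (deriv (Phat n \<theta> h0 h1 J) \<alpha> - deriv pv \<alpha>)^2
       \<le> 4 / d^2 * (e J (\<alpha>+d))^2 + 8 / d^2 * (e J \<alpha>)^2 + 4 / d^2 * (e J (\<alpha>-d))^2 + K"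
    using corr
  proof eventually_elim
    case (elim J)
    have dP: "deriv (Phat n \<theta> h0 h1 J) \<alpha> = f1n J \<alpha>" by (rule DERIV_imp_deriv[OF deriv_Phat'[OF a0]])
    have cb: "(f1n J \<alpha> - g1n \<alpha>)^2 \<le> 4 * ((Phat n \<theta> h0 h1 J (\<alpha>+d) - pv (\<alpha>+d))^2 + 2 * (Phat n \<theta> h0 h1 J \<alpha> - pv \<alpha>)^2
          + (Phat n \<theta> h0 h1 J (\<alpha>-d) - pv (\<alpha>-d))^2) / d^2
          + 2 * (g1n (\<alpha>+d) - g1n \<alpha>)^2 + 2 * (g1n \<alpha> - g1n (\<alpha>-d))^2"
    proof (rule convex_bounds[OF d])
      fix x assume "\<alpha> - d \<le> x" "x \<le> \<alpha> + d"
      then have x: "0 < x" using lo by simp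
      show "(Phat n \<theta> h0 h1 J has_real_derivative f1n J x) (at x)" by (rule deriv_Phat'[OF x])
      show "(pv has_real_derivative g1n x) (at x)" by (rule deriv_pavg'[OF x])
    next
      fix x y assume "\<alpha> - d \<le> x" "x \<le> y" "y \<le> \<alpha> + d"
      then have x: "0 < x" using lo by simp
      show "f1n J x \<le> f1n J y" by (rule f1_mono[OF elim x \<open>x \<le> y\<close>])
      show "g1n x \<le> g1n y" by (rule g1_mono[OF x \<open>x \<le> y\<close>])
    qed
    define p where "p = g1n (\<alpha>+d) - g1n \<alpha>"
    define q where "q = g1n \<alpha> - g1n (\<alpha>-d)"
    have p: "0 \<le> p" "p \<le> 2 * L" unfolding p_def using gm gb[of "\<alpha>+d"] gb[of \<alpha>] a0 d by (auto simp: abs_le_iff)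
    have q: "0 \<le> q" "q \<le> 2 * L" unfolding q_def using gm gb[of "\<alpha>-d"] gb[of \<alpha>] a0 lo by (auto simp: abs_le_iff)
    have "p^2 \<le> 2 * L * p" using mult_right_mono[OF p(2) p(1)] by (simp add: power2_eq_square)
    moreover have "q^2 \<le> 2 * L * q" using mult_right_mono[OF q(2) q(1)] by (simp add: power2_eq_square)
    ultimately have pq: "2 * p^2 + 2 * q^2 \<le> K" unfolding K_def p_def q_def by (simp add: algebra_simps)
    have "4 * ((e J (\<alpha>+d))^2 + 2 * (e J \<alpha>)^2 + (e J (\<alpha>-d))^2) / d^2
        = 4 / d^2 * (e J (\<alpha>+d))^2 + 8 / d^2 * (e J \<alpha>)^2 + 4 / d^2 * (e J (\<alpha>-d))^2"
      by (simp add: add_divide_distrib algebra_simps)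
    then show ?case using cb pq unfolding dP dpv e_def p_def q_def by linarith
  qed
  have me: "(\<lambda>J. ennreal ((e J x)^2)) \<in> borel_measurable JMn" for x
    unfolding e_def by (rule meas_err)
  have "(\<integral>\<^sup>+J. ennreal ((deriv (Phat n \<theta> h0 h1 J) \<alpha> - deriv pv \<alpha>)^2) \<partial>JMn)
      \<le> (\<integral>\<^sup>+J. ennreal (4 / d^2) * ennreal ((e J (\<alpha>+d))^2) + ennreal (8 / d^2) * ennreal ((e J \<alpha>)^2)
                + ennreal (4 / d^2) * ennreal ((e J (\<alpha>-d))^2) + ennreal K \<partial>JMn)"
  proof (rule nn_integral_mono_AE)
    show "AE J in JMn. ennreal ((deriv (Phat n \<theta> h0 h1 J) \<alpha> - deriv pv \<alpha>)^2)
        \<le> ennreal (4 / d^2) * ennreal ((e J (\<alpha>+d))^2) + ennreal (8 / d^2) * ennreal ((e J \<alpha>)^2)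
                + ennreal (4 / d^2) * ennreal ((e J (\<alpha>-d))^2) + ennreal K"
      using pt
    proof eventually_elim
      case (elim J)
      then have "ennreal ((deriv (Phat n \<theta> h0 h1 J) \<alpha> - deriv pv \<alpha>)^2)
          \<le> ennreal (4 / d^2 * (e J (\<alpha>+d))^2 + 8 / d^2 * (e J \<alpha>)^2 + 4 / d^2 * (e J (\<alpha>-d))^2 + K)"
        by (rule ennreal_leI)
      also have "\<dots> = ennreal (4 / d^2) * ennreal ((e J (\<alpha>+d))^2) + ennreal (8 / d^2) * ennreal ((e J \<alpha>)^2)
                + ennreal (4 / d^2) * ennreal ((e J (\<alpha>-d))^2) + ennreal K"
        using K by (simp add: ennreal_plus[symmetric] ennreal_mult[symmetric] del: ennreal_plus)
      finally show ?case .
    qed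
  qed
  also have "\<dots> = ennreal (4 / d^2) * (\<integral>\<^sup>+J. ennreal ((e J (\<alpha>+d))^2) \<partial>JMn)
      + ennreal (8 / d^2) * (\<integral>\<^sup>+J. ennreal ((e J \<alpha>)^2) \<partial>JMn)
      + ennreal (4 / d^2) * (\<integral>\<^sup>+J. ennreal ((e J (\<alpha>-d))^2) \<partial>JMn) + ennreal K"
    using me by (simp add: nn_integral_add nn_integral_cmult J.emeasure_space_1)
  also have "\<dots> \<le> ennreal (4 / d^2) * ennreal (CP / real n) + ennreal (8 / d^2) * ennreal (CP / real n)
      + ennreal (4 / d^2) * ennreal (CP / real n) + ennreal K"
    unfolding e_def using lo hi d
    by (intro add_mono mult_left_mono err_bound order.refl) auto
  also have "\<dots> = ennreal (16 * CP / (real n * d^2) + K)"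
    using CP K d by (simp add: ennreal_plus[symmetric] ennreal_mult[symmetric] field_simps del: ennreal_plus)
  finally show ?thesis unfolding K_def L_def .
qed

lemma total_bound:
  assumes d: "0 < d" and a: "0 < a - d" and ab: "a \<le> b" and hi: "b + d < 1"
  shows "(\<integral>\<^sup>+\<alpha>\<in>{a..b}. (\<integral>\<^sup>+J. ennreal ((deriv (Phat n \<theta> h0 h1 J) \<alpha> - deriv pv \<alpha>)^2) \<partial>JMn) \<partial>lborel)
     \<le> ennreal (16 * CP * (b - a) / (real n * d^2) + 16 * d * (sc n \<theta> * h1)^2)"
proof -
  define L where "L = sc n \<theta> * h1"
  define c0 where "c0 = 16 * CP / (real n * d^2)"
  define h where "h x = c0 + 4 * L * (g1n (x + d) - g1n (x + - d))" for x
  have L: "0 \<le> L" unfolding L_def using sc_nn h1 by simp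
  have c0: "0 \<le> c0" unfolding c0_def using CP by simp
  have h_nn: "0 \<le> h x" if "x \<in> {a..b}" for x
  proof -
    have "g1n (x + - d) \<le> g1n (x + d)" using that a d by (intro g1_mono) auto
    then show ?thesis unfolding h_def using L c0 by simp
  qed
  have pt: "(\<integral>\<^sup>+J. ennreal ((deriv (Phat n \<theta> h0 h1 J) \<alpha> - deriv pv \<alpha>)^2) \<partial>JMn) * indicator {a..b} \<alpha>
      \<le> ennreal (h \<alpha>) * indicator {a..b} \<alpha>" for \<alpha>
  proof (cases "\<alpha> \<in> {a..b}")
    case True
    have "(\<integral>\<^sup>+J. ennreal ((deriv (Phat n \<theta> h0 h1 J) \<alpha> - deriv pv \<alpha>)^2) \<partial>JMn) \<le> ennreal (h \<alpha>)"
      unfolding h_def c0_def L_def using alpha_bound[OF d, of \<alpha>] True a hi by simp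
    then show ?thesis using True by simp
  qed simp
  have i1: "((\<lambda>x. g1n (x + d)) has_integral (pv (b + d) - pv (a + d))) {a..b}"
    by (rule ftc_shift[OF ab]) (use a d in \<open>auto intro!: deriv_pavg'\<close>)
  have i2: "((\<lambda>x. g1n (x + - d)) has_integral (pv (b + - d) - pv (a + - d))) {a..b}"
    by (rule ftc_shift[OF ab]) (use a d in \<open>auto intro!: deriv_pavg'\<close>)
  define V where "V = c0 * (b - a) + 4 * L * ((pv (b + d) - pv (a + d)) - (pv (b + - d) - pv (a + - d)))"
  have ih: "(h has_integral V) {a..b}"
  proof -
    have "((\<lambda>x. c0) has_integral (Henstock_Kurzweil_Integration.content {a..b} *\<^sub>R c0)) {a..b}" by (rule has_integral_const_real)
    then have c: "((\<lambda>x. c0) has_integral c0 * (b - a)) {a..b}" using ab by (simp add: mult.commute)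
    have "((\<lambda>x. g1n (x + d) - g1n (x + - d)) has_integral ((pv (b + d) - pv (a + d)) - (pv (b + - d) - pv (a + - d)))) {a..b}"
      by (rule has_integral_diff[OF i1 i2])
    then have "((\<lambda>x. 4 * L * (g1n (x + d) - g1n (x + - d))) has_integral
        4 * L * ((pv (b + d) - pv (a + d)) - (pv (b + - d) - pv (a + - d)))) {a..b}"
      by (rule has_integral_mult_right)
    from has_integral_add[OF c this] show ?thesis unfolding h_def[abs_def] V_def .
  qed
  have "(\<integral>\<^sup>+\<alpha>\<in>{a..b}. (\<integral>\<^sup>+J. ennreal ((deriv (Phat n \<theta> h0 h1 J) \<alpha> - deriv pv \<alpha>)^2) \<partial>JMn) \<partial>lborel)
      \<le> (\<integral>\<^sup>+\<alpha>. ennreal (h \<alpha>) * indicator {a..b} \<alpha> \<partial>lborel)"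
    by (intro nn_integral_mono pt)
  also have "\<dots> = ennreal V"
    by (rule nn_integral_has_integral_lebesgue'[OF h_nn ih])
  also have "V \<le> 16 * CP * (b - a) / (real n * d^2) + 16 * d * L^2"
  proof -
    have gbL: "\<bar>g1n x\<bar> \<le> L" if "0 < x" for x unfolding L_def by (rule g1_bound'[OF that])
    have m1: "\<bar>pv (b + d) - pv (b - d)\<bar> \<le> 2 * d * L"
      by (rule mvt_bound[OF d, of _ pv g1n]) (use a ab d in \<open>auto intro!: deriv_pavg' gbL\<close>)
    have m2: "\<bar>pv (a + d) - pv (a - d)\<bar> \<le> 2 * d * L"
      by (rule mvt_bound[OF d, of _ pv g1n]) (use a ab d in \<open>auto intro!: deriv_pavg' gbL\<close>)
    have "4 * L * ((pv (b + d) - pv (a + d)) - (pv (b + - d) - pv (a + - d)))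
        = 4 * L * ((pv (b + d) - pv (b - d)) - (pv (a + d) - pv (a - d)))" by (simp add: algebra_simps)
    also have "\<dots> \<le> 4 * L * (2 * d * L + 2 * d * L)"
    proof (rule mult_left_mono)
      have "pv (b + d) - pv (b - d) \<le> 2 * d * L" by (rule abs_le_D1[OF m1])
      moreover have "- (pv (a + d) - pv (a - d)) \<le> 2 * d * L" by (rule abs_le_D2[OF m2])
      ultimately show "(pv (b + d) - pv (b - d)) - (pv (a + d) - pv (a - d)) \<le> 2 * d * L + 2 * d * L" by linarith
    qed (use L in simp)
    also have "\<dots> = 16 * d * L^2" by (simp add: power2_eq_square algebra_simps)
    finally show ?thesis unfolding V_def c0_def by simp
  qed
  then have "ennreal V \<le> ennreal (16 * CP * (b - a) / (real n * d^2) + 16 * d * L^2)" by (rule ennreal_leI)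
  finally show ?thesis unfolding L_def .
qed

end

theorem lemma3p4:
  fixes \<theta> h0 h1 a b C C_P :: real
    and \<mu> :: "nat \<Rightarrow> nat set \<Rightarrow> real measure"
    and JM :: "nat \<Rightarrow> (nat set \<Rightarrow> real) measure"
  assumes theta: "1/2 < \<theta>" "\<theta> < 1"
    and h0: "0 < h0" "h0 < 1"
    and h1: "0 < h1" "h1 \<le> 1"
    and ab: "0 < a" "a \<le> b" "b < 1"
    and JM_def: "\<And>n. JM n = PiM (Pow {..<n}) (\<mu> n)"
    and mu_prob: "\<And>n X. prob_space (\<mu> n X)"
    and mu_borel: "\<And>n X. sets (\<mu> n X) = sets borel"
    and J_nonneg: "\<And>n X. AE x in \<mu> n X. 0 \<le> x"
    and J_sq: "\<And>n X. integrable (\<mu> n X) (\<lambda>x. x ^ 2)"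
    and var_bound: "\<And>n. (\<Sum>X\<in>Pow {..<n}.
            \<integral>x. (x - (\<integral>y. y \<partial>\<mu> n X)) ^ 2 \<partial>\<mu> n X) \<le> C * real n"
    and corr: "\<And>n. AE J in JM n. \<forall>\<tau>. \<forall>i<n. \<forall>j<n.
            gibbs n h0 h1 J \<tau> (\<lambda>\<sigma>. \<sigma> i * \<sigma> j)
            - gibbs n h0 h1 J \<tau> (\<lambda>\<sigma>. \<sigma> i) * gibbs n h0 h1 J \<tau> (\<lambda>\<sigma>. \<sigma> j) \<ge> 0"
    and CP_pos: "0 < C_P"
    and conc: "\<And>n h0' h1' \<alpha>. n \<ge> 1 \<Longrightarrow> 0 < h0' \<Longrightarrow> h0' < 1 \<Longrightarrow> 0 < h1' \<Longrightarrow> h1' \<le> 1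
            \<Longrightarrow> 0 < \<alpha> \<Longrightarrow> \<alpha> < 1 \<Longrightarrow>
            (\<integral>\<^sup>+J. \<integral>\<^sup>+\<tau>. ennreal ((pressure n h0' h1' J \<tau> - pavg (JM n) n \<theta> h0' h1' \<alpha>) ^ 2)
               \<partial>tau_law n \<theta> \<alpha> \<partial>JM n) \<le> ennreal (C_P / real n)"
  shows "\<forall>\<^sub>F n in sequentially.
     (\<integral>\<^sup>+\<alpha>\<in>{a..b}. (\<integral>\<^sup>+J. ennreal ((deriv (Phat n \<theta> h0 h1 J) \<alpha>
                                    - deriv (pavg (JM n) n \<theta> h0 h1) \<alpha>) ^ 2) \<partial>JM n) \<partial>lborel)
     \<le> ennreal ((5 * C_P + 40 * h1 ^ 2) / real n powr ((5 - 4 * \<theta>) / 3))"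
proof -
  define r where "r = (5 - 4 * \<theta>) / 3"
  define e where "e = (1 - 2 * \<theta>) / 3"
  have e_neg: "e < 0" using theta by (simp add: e_def)
  have lim: "((\<lambda>n. real n powr e) \<longlongrightarrow> 0) sequentially"
    by (rule tendsto_neg_powr[OF e_neg filterlim_real_sequentially])
  define m where "m = min a (1 - b) / 2"
  have m: "0 < m" using ab by (simp add: m_def)
  have ev1: "eventually (\<lambda>n. real n powr e < m) sequentially" using order_tendstoD(2)[OF lim m] .
  have ev2: "eventually (\<lambda>n. 1 \<le> n) sequentially" by (rule eventually_ge_at_top)
  show ?thesis using ev1 ev2
  proof eventually_elim
    case (elim n)
    have n1: "1 \<le> n" using elim by simp
    have xpos: "0 < real n" using n1 by simp
    define d where "d = 2 * real n powr e"
    have d: "0 < d" using xpos by (simp add: d_def)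
    have da: "0 < a - d" "b + d < 1" using elim(1) by (auto simp: d_def m_def)
    have concx: "(\<integral>\<^sup>+J. \<integral>\<^sup>+\<tau>. ennreal ((pressure n h0 h1 J \<tau> - pavg (PiM (Pow {..<n}) (\<mu> n)) n \<theta> h0 h1 \<alpha>) ^ 2)
               \<partial>tau_law n \<theta> \<alpha> \<partial>PiM (Pow {..<n}) (\<mu> n)) \<le> ennreal (C_P / real n)"
      if "0 < \<alpha>" "\<alpha> < 1" for \<alpha>
      using conc[OF n1 h0 h1 that] unfolding JM_def .
    have corrn: "AE J in PiM (Pow {..<n}) (\<mu> n). \<forall>\<tau>. \<forall>i<n. \<forall>j<n.
            gibbs n h0 h1 J \<tau> (\<lambda>\<sigma>. \<sigma> i * \<sigma> j)
            - gibbs n h0 h1 J \<tau> (\<lambda>\<sigma>. \<sigma> i) * gibbs n h0 h1 J \<tau> (\<lambda>\<sigma>. \<sigma> j) \<ge> 0"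
      using corr[of n] unfolding JM_def .
    have tb: "(\<integral>\<^sup>+\<alpha>\<in>{a..b}. (\<integral>\<^sup>+J. ennreal ((deriv (Phat n \<theta> h0 h1 J) \<alpha>
                 - deriv (pavg (PiM (Pow {..<n}) (\<mu> n)) n \<theta> h0 h1) \<alpha>) ^ 2) \<partial>PiM (Pow {..<n}) (\<mu> n)) \<partial>lborel)
       \<le> ennreal (16 * C_P * (b - a) / (real n * d^2) + 16 * d * (sc n \<theta> * h1)^2)"
      by (rule total_bound[of "\<mu> n" n h0 h1 C_P \<theta>, OF mu_prob mu_borel J_sq n1 _ _ _ corrn concx d da(1) ab(2) da(2)])
         (use h0 h1 CP_pos in auto)
    have real_ineq: "16 * C_P * (b - a) / (real n * d^2) + 16 * d * (sc n \<theta> * h1)^2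
        \<le> (5 * C_P + 40 * h1 ^ 2) / real n powr r"
    proof -
      have scd: "sc n \<theta> = real n powr (\<theta> - 1)"
        by (rule sc_def[of "\<mu> n" n h0 h1, OF mu_prob mu_borel J_sq n1]) (use h0 h1 in auto)
      have nd: "real n * d^2 = 4 * real n powr r"
      proof -
        have "d^2 = 4 * (real n powr e * real n powr e)" by (simp add: d_def power2_eq_square)
        also have "real n powr e * real n powr e = real n powr (e + e)" by (rule powr_add[symmetric])
        finally have "real n * d^2 = 4 * (real n powr 1 * real n powr (e + e))" using xpos by simp
        also have "real n powr 1 * real n powr (e + e) = real n powr (1 + (e + e))" by (rule powr_add[symmetric])
        also have "1 + (e + e) = r" by (simp add: r_def e_def field_simps)
        finally show ?thesis .
      qed
      have ds: "d * (sc n \<theta> * h1)^2 = 2 * h1^2 / real n powr r"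
      proof -
        have "d * (sc n \<theta> * h1)^2 = 2 * h1^2 * (real n powr e * (real n powr (\<theta> - 1) * real n powr (\<theta> - 1)))"
          by (simp add: d_def scd power2_eq_square algebra_simps)
        also have "real n powr e * (real n powr (\<theta> - 1) * real n powr (\<theta> - 1)) = real n powr (e + ((\<theta> - 1) + (\<theta> - 1)))"
          by (simp only: powr_add)
        also have "real n powr (e + ((\<theta> - 1) + (\<theta> - 1))) = real n powr (- r)"
          by (rule arg_cong[where f="\<lambda>t. real n powr t"]) (simp add: r_def e_def field_simps)
        also have "\<dots> = 1 / real n powr r" by (simp add: powr_minus_divide)
        finally show ?thesis by simp
      qed
      have rp: "0 < real n powr r" using xpos by simp
      have ds': "16 * d * (sc n \<theta> * h1)^2 = 32 * h1^2 / real n powr r"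
        using ds by (simp add: mult.assoc)
      have "16 * C_P * (b - a) / (real n * d^2) + 16 * d * (sc n \<theta> * h1)^2
          = (4 * C_P * (b - a) + 32 * h1^2) / real n powr r"
        unfolding nd ds' using rp by (simp add: field_simps)
      also have "\<dots> \<le> (5 * C_P + 40 * h1 ^ 2) / real n powr r"
      proof (rule divide_right_mono)
        have "C_P * (b - a) \<le> C_P * 1" using ab CP_pos by (intro mult_left_mono) auto
        then show "4 * C_P * (b - a) + 32 * h1^2 \<le> 5 * C_P + 40 * h1 ^ 2"
          using CP_pos zero_le_power2[of h1] by linarith
      qed (use rp in simp)
      finally show ?thesis .
    qed
    show ?case unfolding JM_def r_def[symmetric]
      using tb ennreal_leI[OF real_ineq] by (rule order.trans)
  qed
qed

end
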